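(* Let $\eta$ be a weight of class $*$, let $K\subseteq\mathbb R^n$ be compact, let $\chi\in\mathcal S^*_\dagger(\mathbb R^n)$ and let $\Psi=\{\psi_\lambda\}_{\lambda\in\Lambda}$ be a UCPU of class $*-\dagger$ with points $\{y_\lambda\}_{\lambda\in\Lambda}$. In the Beurling case, for every $\tilde h>0$ there is $\tilde C\ge1$ such that $$\sup_{x\in y_\mu+K}\|\psi_\lambda T_x\chi\|_{\mathcal FL^1_\eta}\le\tilde Ce^{-A(\tilde h|y_\lambda-y_\mu|)}\quad\text{for all }\lambda,\mu\in\Lambda.$$ In the Roumieu case, there are $\tilde h>0$ and $\tilde C\ge1$ such that the same inequality holds.
   Context: $\{M_p\}_{p\in\mathbb N}$, $\{A_p\}_{p\in\mathbb N}$ are sequences of positive numbers with $M_0=M_1=A_0=A_1=1$, both satisfying (M.1) $M_p^2\le M_{p-1}M_{p+1}$ ($p\ge1$), (M.2) $M_{p+q}\le c_0H^{p+q}M_pM_q$ for some $c_0,H\ge1$, (M.6) $p!\le c_0L_0^pM_p$ for some $c_0,L_0\ge1$; $\{A_p\}$ moreover satisfies (M.2)$^*$: $2m_p\le m_{pN}$ for $p\ge p_0$, some $p_0,N\in\mathbb Z_+$, $m_j=A_j/A_{j-1}$. $M_\alpha=M_{|\alpha|}$; associated functions $M(\rho)=\sup_p\ln(\rho^p/M_p)$, $A(\rho)=\sup_p\ln(\rho^p/A_p)$. $\mathcal S^{M_p,h}_{A_p,h}(\mathbb R^n)$ ($h>0$) is the Banach space of smooth $\varphi$ with $\sup_\alpha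 h^{|\alpha|}\|e^{A(h|\cdot|)}\partial^\alpha\varphi\|_{L^\infty}/M_\alpha<\infty$; $\mathcal S^*_\dagger(\mathbb R^n)$ denotes the Beurling space (projective limit as $h\to\infty$) or the Roumieu space (inductive limit as $h\to0^+$). A measurable $\eta:\mathbb R^n\to(0,\infty)$ is a weight of class $*$ if there are $C,\tau>0$ (Beurling; Roumieu: for every $\tau>0$ some $C>0$) with $\eta(x+y)\le C\eta(x)e^{M(\tau|y|)}$. $\mathcal Ff(\xi)=\int e^{-2\pi ix\cdot\xi}f(x)dx$, and $\mathcal FL^1_\eta=\{\mathcal Ff: \eta f\in L^1\}$ with $\|\mathcal Ff\|_{\mathcal FL^1_\eta}=\|\eta f\|_{L^1}$. $T_x\chi=\chi(\cdot-x)$. A uniformly concentrated partition of unity (UCPU) of class $*-\dagger$ is a family $\{\psi_\lambda\}_{\lambda\in\Lambda}\subseteq\mathcal S^*_\dagger(\mathbb R^n)$, $\Lambda$ countable, together with points $\{y_\lambda\}_{\lambda\in\Lambda}\subseteq\mathbb R^n$ such that: (1) for every $h>0$ (Beurling; Roumieu: for some $h>0$) $\sup_{\lambda}\sup_\alpha\sup_x h^{|\alpha|}|\partial^\alpha\psi_\lambda(x)|e^{A(h|x-y_\lambda|)}/M_\alpha<\infty$; (2) for every compact $K$ there is $C_K$ with $\sup_x|\{\lambda: x\in y_\lambda+K\}|\le C_K$; (3) there is a bounded open neighbourhood $U$ of $0$ with $\mathbb R^n=\bigcup_\lambda(y_\lambda+U)$; (4) $\sum_\lambda\psi_\lambda(x)=1$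 for all $x$. *)

theory Defs
  imports "HOL-Analysis.Analysis"
begin

definition seq_M1 :: "(nat \<Rightarrow> real) \<Rightarrow> bool" where
  "seq_M1 M \<longleftrightarrow> (\<forall>p\<ge>1. (M p)\<^sup>2 \<le> M (p - 1) * M (p + 1))"

definition seq_M2 :: "(nat \<Rightarrow> real) \<Rightarrow> bool" where
  "seq_M2 M \<longleftrightarrow> (\<exists>c0 H. c0 \<ge> 1 \<and> H \<ge> 1 \<and>
      (\<forall>p q. M (p + q) \<le> c0 * H ^ (p + q) * M p * M q))"

definition seq_M6 :: "(nat \<Rightarrow> real) \<Rightarrow> bool" where
  "seq_M6 M \<longleftrightarrow> (\<exists>c0 L0. c0 \<ge> 1 \<and> L0 \<ge> 1 \<and>
      (\<forall>p. fact p \<le> c0 * L0 ^ p * M p))"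

definition seq_M2star :: "(nat \<Rightarrow> real) \<Rightarrow> bool" where
  "seq_M2star A \<longleftrightarrow> (\<exists>p0 N::nat. p0 > 0 \<and> N > 0 \<and>
      (\<forall>p\<ge>p0. 2 * (A p / A (p - 1)) \<le> A (p * N) / A (p * N - 1)))"

definition weight_seq :: "(nat \<Rightarrow> real) \<Rightarrow> bool" where
  "weight_seq M \<longleftrightarrow> (\<forall>p. M p > 0) \<and> M 0 = 1 \<and> M 1 = 1 \<and>
      seq_M1 M \<and> seq_M2 M \<and> seq_M6 M"

definition assoc_fn :: "(nat \<Rightarrow> real) \<Rightarrow> real \<Rightarrow> real" where
  "assoc_fn M \<rho> = (if \<rho> \<le> 0 then 0 else (SUP p. ln (\<rho> ^ p / M p)))"

definition partial :: "'n::finite \<Rightarrow> (real^'n \<Rightarrow> complex) \<Rightarrow> real^'n \<Rightarrow> complex" where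
  "partial i f x = vector_derivative (\<lambda>t. f (x + t *\<^sub>R axis i 1)) (at 0)"

fun dlist :: "'n::finite list \<Rightarrow> (real^'n \<Rightarrow> complex) \<Rightarrow> real^'n \<Rightarrow> complex" where
  "dlist [] f = f"
| "dlist (i # is) f = partial i (dlist is f)"

definition enum_list :: "'n::finite list" where
  "enum_list = (SOME xs. distinct xs \<and> set xs = UNIV)"

definition mderiv :: "('n::finite \<Rightarrow> nat) \<Rightarrow> (real^'n \<Rightarrow> complex) \<Rightarrow> real^'n \<Rightarrow> complex" where
  "mderiv \<alpha> f = dlist (concat (map (\<lambda>i. replicate (\<alpha> i) i) enum_list)) f"

definition mlen :: "('n::finite \<Rightarrow> nat) \<Rightarrow> nat" where
  "mlen \<alpha> = (\<Sum>i\<in>UNIV. \<alpha> i)"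

definition smooth_fn :: "(real^'n::finite \<Rightarrow> complex) \<Rightarrow> bool" where
  "smooth_fn f \<longleftrightarrow> (\<forall>ds. continuous_on UNIV (dlist ds f) \<and>
      (\<forall>i x. (\<lambda>t. dlist ds f (x + t *\<^sub>R axis i 1)) differentiable (at 0)))"

definition in_S_h :: "(nat \<Rightarrow> real) \<Rightarrow> (nat \<Rightarrow> real) \<Rightarrow> real \<Rightarrow> (real^'n::finite \<Rightarrow> complex) \<Rightarrow> bool" where
  "in_S_h M A h \<phi> \<longleftrightarrow> smooth_fn \<phi> \<and>
     (\<exists>B. \<forall>\<alpha> x. h ^ mlen \<alpha> * norm (mderiv \<alpha> \<phi> x) * exp (assoc_fn A (h * norm x)) / M (mlen \<alpha>) \<le> B)"

definition in_S :: "bool \<Rightarrow> (nat \<Rightarrow> real) \<Rightarrow> (nat \<Rightarrow> real) \<Rightarrow> (real^'n::finite \<Rightarrow> complex) \<Rightarrow> bool" where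
  "in_S beurling M A \<phi> \<longleftrightarrow>
     (if beurling then (\<forall>h>0. in_S_h M A h \<phi>) else (\<exists>h>0. in_S_h M A h \<phi>))"

definition weight_class :: "bool \<Rightarrow> (nat \<Rightarrow> real) \<Rightarrow> (real^'n::finite \<Rightarrow> real) \<Rightarrow> bool" where
  "weight_class beurling M \<eta> \<longleftrightarrow> \<eta> \<in> borel_measurable lborel \<and> (\<forall>x. \<eta> x > 0) \<and>
     (if beurling
      then (\<exists>C \<tau>. C > 0 \<and> \<tau> > 0 \<and> (\<forall>x y. \<eta> (x + y) \<le> C * \<eta> x * exp (assoc_fn M (\<tau> * norm y))))
      else (\<forall>\<tau>>0. \<exists>C>0. \<forall>x y. \<eta> (x + y) \<le> C * \<eta> x * exp (assoc_fn M (\<tau> * norm y))))"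

definition inv_fourier :: "(real^'n::finite \<Rightarrow> complex) \<Rightarrow> real^'n \<Rightarrow> complex" where
  "inv_fourier g x = (LINT \<xi>|lborel. cis (2 * pi * (x \<bullet> \<xi>)) * g \<xi>)"

text \<open>\<open>\<parallel>g\<parallel>_{FL^1_\<eta>} = \<parallel>\<eta> f\<parallel>_{L^1}\<close> where \<open>g = F f\<close>, i.e. \<open>f = F^{-1} g\<close>
  (the functions here are in \<open>S^*_\<dagger>\<close>, where this is unambiguous); value in \<open>[0,\<infinity>]\<close>.\<close>
definition FL1_norm :: "(real^'n::finite \<Rightarrow> real) \<Rightarrow> (real^'n \<Rightarrow> complex) \<Rightarrow> ennreal" where
  "FL1_norm \<eta> g = (\<integral>\<^sup>+ x. ennreal (\<eta> x * norm (inv_fourier g x)) \<partial>lborel)"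

definition transl :: "real^'n::finite \<Rightarrow> (real^'n \<Rightarrow> complex) \<Rightarrow> real^'n \<Rightarrow> complex" where
  "transl x g = (\<lambda>t. g (t - x))"

definition UCPU :: "bool \<Rightarrow> (nat \<Rightarrow> real) \<Rightarrow> (nat \<Rightarrow> real) \<Rightarrow> 'l set \<Rightarrow>
    ('l \<Rightarrow> real^'n::finite \<Rightarrow> complex) \<Rightarrow> ('l \<Rightarrow> real^'n) \<Rightarrow> bool" where
  "UCPU beurling M A \<Lambda> \<psi> y \<longleftrightarrow>
     countable \<Lambda> \<and>
     (\<forall>l\<in>\<Lambda>. in_S beurling M A (\<psi> l)) \<and>
     (let unif = (\<lambda>h. \<exists>B. \<forall>l\<in>\<Lambda>. \<forall>\<alpha> x.
          h ^ mlen \<alpha> * norm (mderiv \<alpha> (\<psi> l) x) * exp (assoc_fn A (h * norm (x - y l))) / M (mlen \<alpha>) \<le> B)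
      in if beurling then (\<forall>h>0. unif h) else (\<exists>h>0. unif h)) \<and>
     (\<forall>K. compact K \<longrightarrow> (\<exists>CK::nat. \<forall>x. finite {l\<in>\<Lambda>. x \<in> (+) (y l) ` K} \<and>
                                        card {l\<in>\<Lambda>. x \<in> (+) (y l) ` K} \<le> CK)) \<and>
     (\<exists>U. open U \<and> bounded U \<and> 0 \<in> U \<and> UNIV = (\<Union>l\<in>\<Lambda>. (+) (y l) ` U)) \<and>
     (\<forall>x. ((\<lambda>l. \<psi> l x) has_sum 1) \<Lambda>)"

end

theory Submission
  imports Defs "HOL-Analysis.Analysis"
begin

lemma ws_pos: "weight_seq W \<Longrightarrow> W p > 0" by (simp add: weight_seq_def)
lemma ws_0: "weight_seq W \<Longrightarrow> W 0 = 1" by (simp add: weight_seq_def)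

lemma ratio_mono1:
  assumes "weight_seq W" "i \<ge> 1"
  shows "W i / W (i - 1) \<le> W (Suc i) / W i"
proof -
  have p: "\<And>p. W p > 0" using assms ws_pos by blast
  have "(W i)\<^sup>2 \<le> W (i - 1) * W (i + 1)" using assms unfolding weight_seq_def seq_M1_def by blast
  then show ?thesis using p[of i] p[of "i-1"] p[of "Suc i"]
    by (simp add: divide_simps power2_eq_square mult.commute)
qed

lemma ratio_mono:
  assumes "weight_seq W" "i \<ge> 1"
  shows "W i / W (i - 1) \<le> W (i + q) / W (i + q - 1)"
proof (induction q)
  case 0 then show ?case by simp
next
  case (Suc q)
  have "W (i + q) / W (i + q - 1) \<le> W (Suc (i + q)) / W (i + q)"
    using ratio_mono1[OF assms(1), of "i+q"] assms(2) by simp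
  with Suc show ?case by simp
qed

lemma ws_logconv:
  assumes "weight_seq W"
  shows "W k * W q \<le> W (k + q)"
proof (induction k)
  case 0 then show ?case using ws_0[OF assms] by simp
next
  case (Suc k)
  have p: "\<And>p. W p > 0" using assms ws_pos by blast
  have r: "W (Suc k) / W k \<le> W (Suc k + q) / W (k + q)"
    using ratio_mono[OF assms, of "Suc k" q] by simp
  have "W (Suc k) * W q = (W (Suc k) / W k) * (W k * W q)" using p[of k] by simp
  also have "\<dots> \<le> (W (Suc k + q) / W (k + q)) * W (k + q)"
    using r Suc p by (intro mult_mono) (auto intro: less_imp_le)
  also have "\<dots> = W (Suc k + q)" using p[of "k+q"] by simp
  finally show ?case .
qed

lemma ws_logconv': "weight_seq W \<Longrightarrow> k \<le> p \<Longrightarrow> W k * W (p - k) \<le> W p"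
  using ws_logconv[of W k "p - k"] by simp

lemma pow_fact_le_exp: "(x::real) \<ge> 0 \<Longrightarrow> x ^ n / fact n \<le> exp x"
proof -
  assume x: "x \<ge> 0"
  have s: "summable (\<lambda>n. x^n /\<^sub>R fact n)" using exp_converges[of x] sums_summable by blast
  have "sum (\<lambda>n. x^n /\<^sub>R fact n) {n} \<le> suminf (\<lambda>n. x^n /\<^sub>R fact n)"
    by (rule sum_le_suminf[OF s]) (use x in auto)
  then show ?thesis using exp_converges[of x] sums_unique by (fastforce simp: divide_inverse mult.commute)
qed

lemma assoc_bdd:
  assumes "weight_seq W" and that: "\<rho> > 0"
  shows "bdd_above (range (\<lambda>p. ln (\<rho> ^ p / W p)))"
proof -
  have "seq_M6 W" using assms by (simp add: weight_seq_def)
  then obtain c0 L0 where c: "c0 \<ge> 1" "L0 \<ge> 1" "\<And>p. fact p \<le> c0 * L0 ^ p * W p"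
    unfolding seq_M6_def by blast
  have p: "\<And>p. W p > 0" using assms ws_pos by blast
  have "ln (\<rho> ^ p / W p) \<le> ln (c0 * exp (L0 * \<rho>))" for p
  proof -
    have "\<rho> ^ p / W p \<le> \<rho> ^ p * (c0 * L0 ^ p / fact p)"
      using c(3)[of p] p[of p] that c
      by (simp add: divide_simps) (simp add: mult_left_mono mult.assoc mult.left_commute)
    also have "\<dots> = c0 * ((L0 * \<rho>) ^ p / fact p)" by (simp add: power_mult_distrib field_simps)
    also have "\<dots> \<le> c0 * exp (L0 * \<rho>)"
      using pow_fact_le_exp[of "L0*\<rho>" p] c that by (intro mult_left_mono) auto
    finally show ?thesis using that p[of p] c by (subst ln_le_cancel_iff) auto
  qed
  then show ?thesis by (intro bdd_aboveI2) 
qed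

lemma assoc_upper:
  assumes "weight_seq W" "\<rho> \<ge> 0"
  shows "\<rho> ^ p / W p \<le> exp (assoc_fn W \<rho>)"
proof (cases "\<rho> = 0")
  case True
  then show ?thesis using ws_0[OF assms(1)] by (cases p) (auto simp: assoc_fn_def)
next
  case False
  then have r: "\<rho> > 0" using assms by simp
  have "ln (\<rho> ^ p / W p) \<le> (SUP p. ln (\<rho> ^ p / W p))"
    by (rule cSUP_upper[OF _ assoc_bdd[OF assms(1) r]]) simp
  then have "ln (\<rho> ^ p / W p) \<le> assoc_fn W \<rho>" using r by (simp add: assoc_fn_def)
  then show ?thesis using r ws_pos[OF assms(1), of p]
    by (metis exp_le_cancel_iff exp_ln divide_pos_pos zero_less_power)
qed

lemma assoc_nonneg: "weight_seq W \<Longrightarrow> assoc_fn W \<rho> \<ge> 0"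
proof (cases "\<rho> \<le> 0")
  case True then show ?thesis by (simp add: assoc_fn_def)
next
  case False
  assume W: "weight_seq W"
  have "\<rho> ^ 0 / W 0 \<le> exp (assoc_fn W \<rho>)" using False by (intro assoc_upper[OF W]) auto
  then show ?thesis using ws_0[OF W] by simp
qed

lemma assoc_least:
  assumes "weight_seq W" "\<rho> \<ge> 0" "\<And>p. \<rho> ^ p / W p \<le> E"
  shows "exp (assoc_fn W \<rho>) \<le> E"
proof (cases "\<rho> = 0")
  case True
  then show ?thesis using assms(3)[of 0] ws_0[OF assms(1)] by (simp add: assoc_fn_def)
next
  case False
  then have r: "\<rho> > 0" using assms by simp
  have E: "E > 0" using assms(3)[of 0] ws_0[OF assms(1)] by simp
  have "(SUP p. ln (\<rho> ^ p / W p)) \<le> ln E"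
  proof (rule cSUP_least)
    fix p show "ln (\<rho> ^ p / W p) \<le> ln E"
      using assms(3)[of p] r ws_pos[OF assms(1), of p] E by (subst ln_le_cancel_iff) auto
  qed simp
  then have "assoc_fn W \<rho> \<le> ln E" using r by (simp add: assoc_fn_def)
  then show ?thesis using E by (metis exp_le_cancel_iff exp_ln)
qed

lemma assoc_mono:
  assumes "weight_seq W" "0 \<le> a" "a \<le> b"
  shows "assoc_fn W a \<le> assoc_fn W b"
proof -
  have "exp (assoc_fn W a) \<le> exp (assoc_fn W b)"
  proof (rule assoc_least[OF assms(1,2)])
    fix p
    have "a ^ p / W p \<le> b ^ p / W p"
      using assms ws_pos[OF assms(1), of p] by (intro divide_right_mono power_mono) auto
    also have "\<dots> \<le> exp (assoc_fn W b)" using assms by (intro assoc_upper) auto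
    finally show "a ^ p / W p \<le> exp (assoc_fn W b)" .
  qed
  then show ?thesis by simp
qed

lemma assoc_tri:
  assumes "weight_seq W" "0 \<le> a" "0 \<le> b"
  shows "assoc_fn W (a + b) \<le> assoc_fn W (2 * a) + assoc_fn W (2 * b)"
proof -
  have "exp (assoc_fn W (a + b)) \<le> exp (assoc_fn W (2 * a) + assoc_fn W (2 * b))"
  proof (rule assoc_least[OF assms(1)])
    show "0 \<le> a + b" using assms by simp
    fix p
    have m: "a + b \<le> 2 * max a b" by simp
    have "(a + b) ^ p / W p \<le> (2 * max a b) ^ p / W p"
      using assms ws_pos[OF assms(1), of p] m by (intro divide_right_mono power_mono) auto
    also have "\<dots> \<le> exp (assoc_fn W (2 * a) + assoc_fn W (2 * b))"
    proof (cases "a \<le> b")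
      case True
      then have "(2 * max a b) ^ p / W p \<le> exp (assoc_fn W (2 * b))"
        using assoc_upper[OF assms(1), of "2*b" p] assms by (simp add: max_def)
      also have "\<dots> \<le> exp (assoc_fn W (2 * a) + assoc_fn W (2 * b))"
        using assoc_nonneg[OF assms(1)] by simp
      finally show ?thesis .
    next
      case False
      then have "(2 * max a b) ^ p / W p \<le> exp (assoc_fn W (2 * a))"
        using assoc_upper[OF assms(1), of "2*a" p] assms by (simp add: max_def)
      also have "\<dots> \<le> exp (assoc_fn W (2 * a) + assoc_fn W (2 * b))"
        using assoc_nonneg[OF assms(1)] by simp
      finally show ?thesis .
    qed
    finally show "(a + b) ^ p / W p \<le> exp (assoc_fn W (2 * a) + assoc_fn W (2 * b))" .
  qed
  then show ?thesis by simp
qed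

lemma assoc_M2:
  assumes "weight_seq W"
  obtains c0 H where "c0 \<ge> 1" "H \<ge> 1" "\<And>\<rho>. \<rho> \<ge> 0 \<Longrightarrow> exp (assoc_fn W \<rho>) ^ 2 \<le> c0 * exp (assoc_fn W (H * \<rho>))"
proof -
  have "seq_M2 W" using assms by (simp add: weight_seq_def)
  then obtain c0 H where c: "c0 \<ge> 1" "H \<ge> 1" "\<And>p q. W (p + q) \<le> c0 * H ^ (p + q) * W p * W q"
    unfolding seq_M2_def by blast
  have p: "\<And>p. W p > 0" using assms ws_pos by blast
  have main: "exp (assoc_fn W \<rho>) ^ 2 \<le> c0 * exp (assoc_fn W (H * \<rho>))" if r: "\<rho> \<ge> 0" for \<rho>
  proof -
    let ?E = "c0 * exp (assoc_fn W (H * \<rho>))"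
    have E: "?E > 0" using c by simp
    have pq: "\<rho> ^ p / W p * (\<rho> ^ q / W q) \<le> ?E" for p q
    proof -
      have "\<rho> ^ p / W p * (\<rho> ^ q / W q) = \<rho> ^ (p + q) / (W p * W q)" by (simp add: power_add)
      also have "\<dots> \<le> c0 * ((H * \<rho>) ^ (p + q) / W (p + q))"
      proof -
        have "W (p + q) * \<rho> ^ (p + q) \<le> (c0 * H ^ (p + q) * W p * W q) * \<rho> ^ (p + q)"
          using c(3)[of p q] r by (intro mult_right_mono) auto
        then show ?thesis using p[of p] p[of q] p[of "p+q"]
          by (simp add: divide_simps power_mult_distrib mult_ac)
      qed
      also have "\<dots> \<le> ?E" using c r by (intro mult_left_mono assoc_upper[OF assms(1)]) auto
      finally show ?thesis .
    qed
    have q: "exp (assoc_fn W \<rho>) * (\<rho> ^ q / W q) \<le> ?E" for q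
    proof (cases "\<rho> ^ q / W q = 0")
      case True
      have z: "exp (assoc_fn W \<rho>) * (\<rho> ^ q / W q) = 0" by (subst True) simp
      show ?thesis unfolding z using E by (rule less_imp_le)
    next
      case False
      have "\<rho> ^ q / W q \<ge> 0" using r p[of q] by simp
      then have pos: "\<rho> ^ q / W q > 0" using False by linarith
      have "exp (assoc_fn W \<rho>) \<le> ?E / (\<rho> ^ q / W q)"
      proof (rule assoc_least[OF assms(1) r])
        fix p show "\<rho> ^ p / W p \<le> ?E / (\<rho> ^ q / W q)"
          using pq[of p q] pos by (simp only: pos_le_divide_eq)
      qed
      then show ?thesis using pos by (simp only: pos_le_divide_eq)
    qed
    have "exp (assoc_fn W \<rho>) \<le> ?E / exp (assoc_fn W \<rho>)"
    proof (rule assoc_least[OF assms(1) r])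
      fix p show "\<rho> ^ p / W p \<le> ?E / exp (assoc_fn W \<rho>)"
        using q[of p] by (simp only: pos_le_divide_eq exp_gt_zero mult.commute)
    qed
    then show ?thesis by (simp only: pos_le_divide_eq exp_gt_zero power2_eq_square)
  qed
  show ?thesis using that[OF c(1,2) main] .
qed


lemma pascal_sum:
  fixes f :: "nat \<Rightarrow> nat \<Rightarrow> 'a::comm_ring_1"
  shows "(\<Sum>i\<le>k. of_nat (k choose i) * (f i (Suc k - i) + f (Suc i) (k - i))) =
         (\<Sum>i\<le>Suc k. of_nat (Suc k choose i) * f i (Suc k - i))"
proof -
  have A: "(\<Sum>i\<le>k. of_nat (k choose i) * f i (Suc k - i)) =
        f 0 (Suc k) + (\<Sum>i\<le>k. of_nat (k choose Suc i) * f (Suc i) (k - i))"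
  proof -
    have "(\<Sum>i\<le>k. of_nat (k choose i) * f i (Suc k - i)) = 
          (\<Sum>i\<le>Suc k. of_nat (k choose i) * f i (Suc k - i))" by (simp add: binomial_eq_0)
    also have "\<dots> = f 0 (Suc k) + (\<Sum>i\<le>k. of_nat (k choose Suc i) * f (Suc i) (k - i))"
      by (subst sum.atMost_Suc_shift) (simp add: binomial_eq_0)
    finally show ?thesis .
  qed
  show ?thesis
    by (subst sum.atMost_Suc_shift) (simp add: A sum.distrib algebra_simps)
qed

abbreviation ax :: "'n::finite \<Rightarrow> real^'n" where "ax j \<equiv> axis j (1::real)"

lemma axis_hvd:
  assumes "\<And>x. (\<lambda>t. F (x + t *\<^sub>R ax j)) differentiable (at 0)"
  shows "((\<lambda>t. F (\<xi> + t *\<^sub>R ax j)) has_vector_derivative partial j F (\<xi> + t0 *\<^sub>R ax j)) (at t0)"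
proof -
  let ?x0 = "\<xi> + t0 *\<^sub>R ax j"
  let ?G = "\<lambda>t. F (?x0 + t *\<^sub>R ax j)"
  have G: "(?G has_vector_derivative partial j F ?x0) (at 0)"
    unfolding partial_def using assms[of ?x0] vector_derivative_works by blast
  have s: "((\<lambda>t. t - t0) has_vector_derivative 1) (at t0)"
    by (auto intro!: derivative_eq_intros)
  have "((?G \<circ> (\<lambda>t. t - t0)) has_vector_derivative (1 *\<^sub>R partial j F ?x0)) (at t0)"
    by (rule vector_diff_chain_at[OF s]) (simp add: G)
  moreover have "(?G \<circ> (\<lambda>t. t - t0)) = (\<lambda>t. F (\<xi> + t *\<^sub>R ax j))"
    by (rule ext) (simp add: algebra_simps)
  ultimately show ?thesis by simp
qed

definition axd :: "'n::finite \<Rightarrow> (real^'n \<Rightarrow> complex) \<Rightarrow> bool" where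
  "axd j f \<longleftrightarrow> (\<forall>k x. (\<lambda>t. dlist (replicate k j) f (x + t *\<^sub>R ax j)) differentiable (at 0))"

lemma smooth_axd: "smooth_fn f \<Longrightarrow> axd j f"
  unfolding smooth_fn_def axd_def by blast

lemma axd_hvd:
  assumes "axd j f"
  shows "((\<lambda>t. dlist (replicate k j) f (\<xi> + t *\<^sub>R ax j)) has_vector_derivative
          dlist (replicate (Suc k) j) f (\<xi> + t0 *\<^sub>R ax j)) (at t0)"
  using axis_hvd[of "dlist (replicate k j) f" j \<xi> t0] assms unfolding axd_def by simp

lemma leibniz:
  assumes a: "axd j a" and b: "axd j b"
  shows "dlist (replicate k j) (\<lambda>\<xi>. a \<xi> * b \<xi>) \<xi> =
     (\<Sum>i\<le>k. of_nat (k choose i) * dlist (replicate i j) a \<xi> * dlist (replicate (k - i) j) b \<xi>)"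
proof (induction k arbitrary: \<xi>)
  case 0 then show ?case by simp
next
  case (Suc k)
  let ?S = "\<lambda>\<xi>. (\<Sum>i\<le>k. of_nat (k choose i) * (dlist (replicate i j) a \<xi> * dlist (replicate (k - i) j) b \<xi>))"
  have eq: "dlist (replicate k j) (\<lambda>\<xi>. a \<xi> * b \<xi>) = ?S" using Suc.IH by (intro ext) (simp add: mult.assoc)
  have "((\<lambda>t. ?S (\<xi> + t *\<^sub>R ax j)) has_vector_derivative
     (\<Sum>i\<le>k. of_nat (k choose i) * (dlist (replicate i j) a (\<xi> + 0 *\<^sub>R ax j) * dlist (replicate (Suc (k - i)) j) b (\<xi> + 0 *\<^sub>R ax j)
        + dlist (replicate (Suc i) j) a (\<xi> + 0 *\<^sub>R ax j) * dlist (replicate (k - i) j) b (\<xi> + 0 *\<^sub>R ax j)))) (at 0)"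
    by (intro has_vector_derivative_sum has_vector_derivative_mult_right
         has_vector_derivative_mult axd_hvd a b)
  then have D: "((\<lambda>t. ?S (\<xi> + t *\<^sub>R ax j)) has_vector_derivative
     (\<Sum>i\<le>k. of_nat (k choose i) * (dlist (replicate i j) a \<xi> * dlist (replicate (Suc k - i) j) b \<xi>
        + dlist (replicate (Suc i) j) a \<xi> * dlist (replicate (k - i) j) b \<xi>))) (at 0)"
    by (simp add: Suc_diff_le)
  have "dlist (replicate (Suc k) j) (\<lambda>\<xi>. a \<xi> * b \<xi>) \<xi> = vector_derivative (\<lambda>t. ?S (\<xi> + t *\<^sub>R ax j)) (at 0)"
    by (simp add: partial_def eq)
  also have "\<dots> = (\<Sum>i\<le>k. of_nat (k choose i) * (dlist (replicate i j) a \<xi> * dlist (replicate (Suc k - i) j) b \<xi>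
        + dlist (replicate (Suc i) j) a \<xi> * dlist (replicate (k - i) j) b \<xi>))"
    by (rule vector_derivative_at[OF D])
  also have "\<dots> = (\<Sum>i\<le>Suc k. of_nat (Suc k choose i) * (dlist (replicate i j) a \<xi> * dlist (replicate (Suc k - i) j) b \<xi>))"
    using pascal_sum[of k "\<lambda>i l. dlist (replicate i j) a \<xi> * dlist (replicate l j) b \<xi>"] by simp
  finally show ?case by (simp add: mult.assoc)
qed


lemma mvt1_lt:
  fixes f :: "real \<Rightarrow> complex"
  assumes d: "\<And>t. (f has_vector_derivative f' t) (at t)"
    and bd: "\<And>t. a \<le> t \<Longrightarrow> t \<le> b \<Longrightarrow> norm (f' t) \<le> B" and ab: "a < b"
  shows "norm (f b - f a) \<le> B * (b - a)"
proof -
  have "norm (f b - f a) \<le> B * b - B * a"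
  proof (rule differentiable_bound_general[OF ab, where f' = f' and \<phi>' = "\<lambda>_. B"])
    show "continuous_on {a..b} f"
      using d by (intro continuous_on_vector_derivative) (auto intro: has_vector_derivative_at_within)
    show "continuous_on {a..b} ((*) B)" by (intro continuous_intros)
    show "\<And>x. ((*) B has_vector_derivative B) (at x)"
      by (auto intro!: derivative_eq_intros simp: has_real_derivative_iff_has_vector_derivative[symmetric])
  qed (use d bd in auto)
  then show ?thesis by (simp add: algebra_simps)
qed

lemma mvt1:
  fixes f :: "real \<Rightarrow> complex"
  assumes d: "\<And>t. (f has_vector_derivative f' t) (at t)"
    and bd: "\<And>t. min a b \<le> t \<Longrightarrow> t \<le> max a b \<Longrightarrow> norm (f' t) \<le> B"
  shows "norm (f b - f a) \<le> B * \<bar>b - a\<bar>"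
proof (cases a b rule: linorder_cases)
  case less then show ?thesis using mvt1_lt[OF d, of a b B] bd by auto
next
  case equal then show ?thesis by simp
next
  case greater then show ?thesis using mvt1_lt[OF d, of b a B] bd by (auto simp: norm_minus_commute)
qed

fun fdiff :: "real \<Rightarrow> nat \<Rightarrow> (real \<Rightarrow> complex) \<Rightarrow> real \<Rightarrow> complex" where
  "fdiff s 0 \<phi> = \<phi>"
| "fdiff s (Suc p) \<phi> = fdiff s p (\<lambda>t. \<phi> (t + s) - \<phi> t)"

lemma fdiff_bound:
  assumes "\<And>k t. (\<phi> k has_vector_derivative \<phi> (Suc k) t) (at t)"
    and "\<And>t. \<bar>t - a\<bar> \<le> real p * \<bar>s\<bar> \<Longrightarrow> norm (\<phi> p t) \<le> B"
  shows "norm (fdiff s p (\<phi> 0) a) \<le> \<bar>s\<bar> ^ p * B"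
  using assms
proof (induction p arbitrary: \<phi> B)
  case 0 then show ?case by simp
next
  case (Suc p)
  let ?\<psi> = "\<lambda>k t. \<phi> k (t + s) - \<phi> k t"
  have d: "(?\<psi> k has_vector_derivative ?\<psi> (Suc k) t) (at t)" for k t
  proof -
    have "((\<lambda>t. t + s) has_vector_derivative 1) (at t)" by (auto intro!: derivative_eq_intros)
    then have "((\<phi> k \<circ> (\<lambda>t. t + s)) has_vector_derivative (1 *\<^sub>R \<phi> (Suc k) (t + s))) (at t)"
      by (rule vector_diff_chain_at) (rule Suc.prems(1))
    then have "((\<lambda>t. \<phi> k (t + s)) has_vector_derivative \<phi> (Suc k) (t + s)) (at t)" by (simp add: o_def)
    then show ?thesis by (intro has_vector_derivative_diff Suc.prems(1))
  qed
  have b: "norm (?\<psi> p t) \<le> \<bar>s\<bar> * B" if t: "\<bar>t - a\<bar> \<le> real p * \<bar>s\<bar>" for t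
  proof -
    have "norm (\<phi> p (t + s) - \<phi> p t) \<le> B * \<bar>(t + s) - t\<bar>"
    proof (rule mvt1[OF Suc.prems(1)])
      fix u assume "min t (t + s) \<le> u" "u \<le> max t (t + s)"
      then have "\<bar>u - t\<bar> \<le> \<bar>s\<bar>" by (auto simp: min_def max_def split: if_splits)
      then have "\<bar>u - a\<bar> \<le> real p * \<bar>s\<bar> + \<bar>s\<bar>" using t by linarith
      then show "norm (\<phi> (Suc p) u) \<le> B" by (intro Suc.prems(2)) (simp add: algebra_simps)
    qed
    then show ?thesis by (simp add: mult.commute)
  qed
  have "norm (fdiff s p (?\<psi> 0) a) \<le> \<bar>s\<bar> ^ p * (\<bar>s\<bar> * B)"
    by (rule Suc.IH[of ?\<psi>]) (use d b in auto)
  then show ?case by (simp add: mult_ac)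
qed


fun ndiff :: "real^'n::finite \<Rightarrow> nat \<Rightarrow> (real^'n \<Rightarrow> complex) \<Rightarrow> real^'n \<Rightarrow> complex" where
  "ndiff v 0 g = g"
| "ndiff v (Suc p) g = ndiff v p (\<lambda>\<xi>. g (\<xi> + v) - g \<xi>)"

lemma ndiff_fdiff:
  "ndiff (s *\<^sub>R ax j) p g (\<xi> + t *\<^sub>R ax j) = fdiff s p (\<lambda>t. g (\<xi> + t *\<^sub>R ax j)) t"
proof (induction p arbitrary: g t)
  case 0 then show ?case by simp
next
  case (Suc p)
  have e: "(\<lambda>t. g (\<xi> + t *\<^sub>R ax j + s *\<^sub>R ax j) - g (\<xi> + t *\<^sub>R ax j)) =
        (\<lambda>t. g (\<xi> + (t + s) *\<^sub>R ax j) - g (\<xi> + t *\<^sub>R ax j))"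
    by (rule ext) (simp add: scaleR_add_left add.assoc)
  show ?case using Suc.IH[of "\<lambda>\<xi>. g (\<xi> + s *\<^sub>R ax j) - g \<xi>" t] by (simp add: e)
qed

lemma cis_meas[measurable]: "(\<lambda>\<xi>::real^'n::finite. cis (2 * pi * (x \<bullet> \<xi>))) \<in> borel_measurable borel"
  by (intro borel_measurable_continuous_onI continuous_intros)

lemma translate_integrable:
  fixes g :: "real^'n::finite \<Rightarrow> complex"
  assumes "integrable lborel g"
  shows "integrable lborel (\<lambda>\<xi>. g (\<xi> + v))"
proof -
  have m: "g \<in> borel_measurable borel" using assms by (simp add: borel_measurable_integrable)
  have "integrable (distr lborel borel ((+) v)) g" using assms by (simp add: lborel_distr_plus)
  then have "integrable lborel (\<lambda>\<xi>. g (v + \<xi>))" by (subst (asm) integrable_distr_eq) (use m in auto)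
  then show ?thesis by (simp add: add.commute)
qed

lemma translate_integral:
  fixes F :: "real^'n::finite \<Rightarrow> complex"
  assumes "F \<in> borel_measurable borel"
  shows "integral\<^sup>L lborel F = integral\<^sup>L lborel (\<lambda>\<xi>. F (v + \<xi>))"
proof -
  have "integral\<^sup>L lborel F = integral\<^sup>L (distr lborel borel ((+) v)) F" by (simp add: lborel_distr_plus)
  also have "\<dots> = integral\<^sup>L lborel (\<lambda>\<xi>. F (v + \<xi>))" by (rule integral_distr) (use assms in auto)
  finally show ?thesis .
qed

lemma cis_integrable:
  fixes g :: "real^'n::finite \<Rightarrow> complex"
  assumes "integrable lborel g"
  shows "integrable lborel (\<lambda>\<xi>. cis (2 * pi * (x \<bullet> \<xi>)) * g \<xi>)"
proof (rule Bochner_Integration.integrable_bound[OF assms])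
  have m: "g \<in> borel_measurable borel" using assms by (simp add: borel_measurable_integrable)
  then show "(\<lambda>\<xi>. cis (2 * pi * (x \<bullet> \<xi>)) * g \<xi>) \<in> borel_measurable lborel" by measurable
qed (simp add: norm_mult)

lemma inv_fourier_shift:
  fixes g :: "real^'n::finite \<Rightarrow> complex"
  assumes "integrable lborel g"
  shows "inv_fourier (\<lambda>\<xi>. g (\<xi> + v)) x = cis (- (2 * pi * (x \<bullet> v))) * inv_fourier g x"
proof -
  have m: "g \<in> borel_measurable borel" using assms by (simp add: borel_measurable_integrable)
  have "inv_fourier g x = integral\<^sup>L lborel (\<lambda>\<xi>. cis (2 * pi * (x \<bullet> (v + \<xi>))) * g (v + \<xi>))"
    unfolding inv_fourier_def by (rule translate_integral) (use m in measurable)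
  also have "\<dots> = integral\<^sup>L lborel (\<lambda>\<xi>. cis (2 * pi * (x \<bullet> v)) * (cis (2 * pi * (x \<bullet> \<xi>)) * g (\<xi> + v)))"
    by (rule Bochner_Integration.integral_cong) (auto simp: inner_add_right distrib_left cis_mult[symmetric] add.commute mult.assoc)
  also have "\<dots> = cis (2 * pi * (x \<bullet> v)) * inv_fourier (\<lambda>\<xi>. g (\<xi> + v)) x"
    unfolding inv_fourier_def by simp
  finally have "inv_fourier g x = cis (2 * pi * (x \<bullet> v)) * inv_fourier (\<lambda>\<xi>. g (\<xi> + v)) x" .
  then have "cis (- (2 * pi * (x \<bullet> v))) * inv_fourier g x = 
      (cis (- (2 * pi * (x \<bullet> v))) * cis (2 * pi * (x \<bullet> v))) * inv_fourier (\<lambda>\<xi>. g (\<xi> + v)) x"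
    by (simp add: mult.assoc)
  then show ?thesis by (simp add: cis_mult)
qed

lemma ndiff_fourier:
  fixes g :: "real^'n::finite \<Rightarrow> complex"
  assumes "integrable lborel g"
  shows "integrable lborel (ndiff v p g) \<and>
    inv_fourier (ndiff v p g) x = (cis (- (2 * pi * (x \<bullet> v))) - 1) ^ p * inv_fourier g x"
  using assms
proof (induction p arbitrary: g)
  case 0 then show ?case by simp
next
  case (Suc p)
  let ?h = "\<lambda>\<xi>. g (\<xi> + v) - g \<xi>"
  have i1: "integrable lborel (\<lambda>\<xi>. g (\<xi> + v))" by (rule translate_integrable[OF Suc.prems])
  have ih: "integrable lborel ?h" using i1 Suc.prems by (rule Bochner_Integration.integrable_diff)
  have "inv_fourier ?h x = inv_fourier (\<lambda>\<xi>. g (\<xi> + v)) x - inv_fourier g x"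
    unfolding inv_fourier_def right_diff_distrib
    by (rule Bochner_Integration.integral_diff) (intro cis_integrable i1 Suc.prems)+
  also have "\<dots> = (cis (- (2 * pi * (x \<bullet> v))) - 1) * inv_fourier g x"
    by (simp add: inv_fourier_shift[OF Suc.prems] algebra_simps)
  finally have "inv_fourier ?h x = (cis (- (2 * pi * (x \<bullet> v))) - 1) * inv_fourier g x" .
  with Suc.IH[OF ih] show ?case by (simp add: mult_ac)
qed

lemma inv_fourier_norm:
  "norm (inv_fourier g x) \<le> integral\<^sup>L lborel (\<lambda>\<xi>. norm (g \<xi>))"
proof -
  have "norm (inv_fourier g x) \<le> integral\<^sup>L lborel (\<lambda>\<xi>. norm (cis (2 * pi * (x \<bullet> \<xi>)) * g \<xi>))"
    unfolding inv_fourier_def by (rule integral_norm_bound)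
  then show ?thesis by (simp add: norm_mult)
qed


definition f1 :: "real \<Rightarrow> real" where "f1 t = 1 / (1 + t\<^sup>2)"

lemma nz1: "1 + t\<^sup>2 \<noteq> (0::real)" using zero_le_power2[of t] by linarith

lemma f1_pos: "f1 t > 0" by (simp add: f1_def add_pos_nonneg)
lemma f1_meas[measurable]: "f1 \<in> borel_measurable borel"
  unfolding f1_def by (intro borel_measurable_continuous_onI continuous_intros) (simp add: nz1)

lemma f1_half: "(\<integral>\<^sup>+t. ennreal (f1 t) * indicator {0..} t \<partial>lborel) = ennreal (pi / 2)"
proof (subst nn_integral_FTC_atLeast[where F = arctan])
  show "(arctan \<longlongrightarrow> pi / 2) at_top" by (rule tendsto_arctan_at_top)
  fix x :: real
  show "(arctan has_real_derivative f1 x) (at x)"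
    unfolding f1_def by (auto intro!: derivative_eq_intros simp: power2_eq_square divide_inverse)
qed (auto simp: f1_def add_pos_nonneg less_imp_le)

lemma f1_fin: "(\<integral>\<^sup>+t. ennreal (f1 t) \<partial>lborel) < \<infinity>"
proof -
  let ?g = "\<lambda>t. ennreal (f1 t) * indicator {0..} t"
  have "(\<integral>\<^sup>+t. ennreal (f1 t) \<partial>lborel) \<le> (\<integral>\<^sup>+t. ?g t + ?g (0 + (-1) * t) \<partial>lborel)"
    by (intro nn_integral_mono) (auto simp: f1_def split: split_indicator)
  also have "\<dots> = (\<integral>\<^sup>+t. ?g t \<partial>lborel) + (\<integral>\<^sup>+t. ?g (0 + (-1) * t) \<partial>lborel)"
    by (rule nn_integral_add) auto
  also have "(\<integral>\<^sup>+t. ?g (0 + (-1) * t) \<partial>lborel) = (\<integral>\<^sup>+t. ?g t \<partial>lborel)"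
    using nn_integral_real_affine[of ?g "-1" 0] by simp
  finally have le: "(\<integral>\<^sup>+t. ennreal (f1 t) \<partial>lborel) \<le> (\<integral>\<^sup>+t. ?g t \<partial>lborel) + (\<integral>\<^sup>+t. ?g t \<partial>lborel)" .
  have "(\<integral>\<^sup>+t. ?g t \<partial>lborel) + (\<integral>\<^sup>+t. ?g t \<partial>lborel) < \<infinity>"
    by (simp add: f1_half ennreal_plus[symmetric] del: ennreal_plus)
  with le show ?thesis by (rule le_less_trans)
qed

definition Pn :: "real^'n::finite \<Rightarrow> real" where "Pn \<zeta> = (\<Prod>j\<in>UNIV. f1 (\<zeta> $ j))"

lemma Pn_pos: "Pn \<zeta> > 0" unfolding Pn_def by (intro prod_pos) (simp add: f1_pos)

lemma Pn_cont: "continuous_on UNIV Pn"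
  unfolding Pn_def f1_def by (intro continuous_intros) (simp add: nz1)

lemma Pn_meas[measurable]: "Pn \<in> borel_measurable borel"
  by (intro borel_measurable_continuous_onI Pn_cont)

lemma Basis_cart_real: "(Basis :: (real^'n::finite) set) = range (\<lambda>i. axis i 1)"
  by (auto simp: Basis_vec_def)

lemma Pn_basis: "Pn \<zeta> = (\<Prod>b\<in>(Basis :: (real^'n::finite) set). f1 (\<zeta> \<bullet> b))"
proof -
  have inj: "inj_on (\<lambda>i::'n. axis i (1::real)) UNIV" by (auto simp: inj_on_def axis_eq_axis)
  show ?thesis unfolding Basis_cart_real Pn_def
    by (subst prod.reindex[OF inj]) (simp add: inner_axis)
qed

lemma Pn_integrable: "integrable lborel (Pn :: real^'n::finite \<Rightarrow> real)"
proof (rule integrableI_bounded)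
  show "Pn \<in> borel_measurable lborel" by simp
  have "(\<integral>\<^sup>+x. ennreal (norm (Pn (x::real^'n))) \<partial>lborel) = (\<integral>\<^sup>+x. (\<Prod>b\<in>(Basis :: (real^'n) set). ennreal (f1 (x \<bullet> b))) \<partial>lborel)"
  proof (intro nn_integral_cong)
    fix x :: "real^'n"
    have "norm (Pn x) = Pn x" using Pn_pos[of x] by simp
    then show "ennreal (norm (Pn x)) = (\<Prod>b\<in>(Basis :: (real^'n) set). ennreal (f1 (x \<bullet> b)))"
      by (simp add: Pn_basis prod_ennreal f1_pos less_imp_le)
  qed
  also have "\<dots> = (\<Prod>b\<in>(Basis :: (real^'n) set). (\<integral>\<^sup>+t. ennreal (f1 t) \<partial>lborel))"
    by (rule nn_integral_lborel_prod) auto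
  also have "\<dots> < \<infinity>" using f1_fin by (simp add: prod_constant less_top[symmetric] power_eq_top_ennreal)
  finally show "(\<integral>\<^sup>+x. ennreal (norm (Pn (x::real^'n))) \<partial>lborel) < \<infinity>" .
qed

lemma Pn_translate_integrable: "integrable lborel (\<lambda>\<zeta>::real^'n::finite. Pn (\<zeta> - x))"
proof -
  have "integrable (distr lborel borel ((+) (-x))) Pn" using Pn_integrable by (simp add: lborel_distr_plus)
  then have "integrable lborel (\<lambda>\<xi>. Pn (-x + \<xi>))" by (subst (asm) integrable_distr_eq) auto
  then show ?thesis by simp
qed

lemma Pn_translate_integral: "integral\<^sup>L lborel (\<lambda>\<zeta>::real^'n::finite. Pn (\<zeta> - x)) = integral\<^sup>L lborel (Pn :: real^'n \<Rightarrow> real)"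
proof -
  have "integral\<^sup>L lborel (Pn :: real^'n \<Rightarrow> real) = integral\<^sup>L (distr lborel borel ((+) (-x))) (Pn :: real^'n \<Rightarrow> real)" by (simp add: lborel_distr_plus)
  also have "\<dots> = integral\<^sup>L lborel (\<lambda>\<xi>. (Pn :: real^'n \<Rightarrow> real) (-x + \<xi>))" by (rule integral_distr) auto
  finally show ?thesis by simp
qed

lemma Pn_lower: "1 / (1 + (norm \<zeta>)\<^sup>2) ^ CARD('n) \<le> Pn (\<zeta> :: real^'n::finite)"
proof -
  have "(\<Prod>j\<in>(UNIV::'n set). 1 + (\<zeta> $ j)\<^sup>2) \<le> (\<Prod>j\<in>(UNIV::'n set). 1 + (norm \<zeta>)\<^sup>2)"
  proof (rule prod_mono)
    fix j
    have "\<bar>\<zeta> $ j\<bar> \<le> norm \<zeta>" by (rule component_le_norm_cart)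
    then have "(\<zeta> $ j)\<^sup>2 \<le> (norm \<zeta>)\<^sup>2" by (metis abs_le_square_iff abs_norm_cancel)
    then show "0 \<le> 1 + (\<zeta> $ j)\<^sup>2 \<and> 1 + (\<zeta> $ j)\<^sup>2 \<le> 1 + (norm \<zeta>)\<^sup>2" by simp
  qed
  then have "(\<Prod>j\<in>(UNIV::'n set). 1 + (\<zeta> $ j)\<^sup>2) \<le> (1 + (norm \<zeta>)\<^sup>2) ^ CARD('n)" by simp
  moreover have "Pn \<zeta> = 1 / (\<Prod>j\<in>(UNIV::'n set). 1 + (\<zeta> $ j)\<^sup>2)"
    unfolding Pn_def f1_def by (simp add: prod_dividef)
  moreover have "(\<Prod>j\<in>(UNIV::'n set). 1 + (\<zeta> $ j)\<^sup>2) > 0" by (intro prod_pos) (simp add: add_pos_nonneg)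
  ultimately show ?thesis by (simp add: frac_le)
qed

lemma assoc_decay_Pn:
  assumes W: "weight_seq W" and c: "c > 0"
  shows "exp (- assoc_fn W (c * norm (\<zeta> :: real^'n::finite))) \<le>
     (2 ^ CARD('n) * max 1 (W (2 * CARD('n)) / c ^ (2 * CARD('n)))) * Pn \<zeta>"
proof -
  let ?N = "CARD('n)" let ?r = "norm \<zeta>"
  let ?K = "2 ^ ?N * max 1 (W (2 * ?N) / c ^ (2 * ?N))"
  have Wp: "W (2 * ?N) > 0" using ws_pos[OF W] by blast
  have key: "exp (- assoc_fn W (c * ?r)) * (1 + ?r\<^sup>2) ^ ?N \<le> ?K"
  proof (cases "?r \<le> 1")
    case True
    have "(1 + ?r\<^sup>2) ^ ?N \<le> 2 ^ ?N"
      using True by (intro power_mono) (auto simp: power_le_one)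
    moreover have "exp (- assoc_fn W (c * ?r)) \<le> 1" using assoc_nonneg[OF W] by simp
    ultimately have "exp (- assoc_fn W (c * ?r)) * (1 + ?r\<^sup>2) ^ ?N \<le> 1 * 2 ^ ?N"
      by (intro mult_mono) auto
    also have "\<dots> \<le> ?K" by simp
    finally show ?thesis .
  next
    case False
    then have r1: "?r > 1" by simp
    have "1 \<le> ?r\<^sup>2" using r1 by (intro one_le_power) simp
    then have "(1 + ?r\<^sup>2) ^ ?N \<le> (2 * ?r\<^sup>2) ^ ?N"
      by (intro power_mono) auto
    also have "\<dots> = 2 ^ ?N * ?r ^ (2 * ?N)" by (simp add: power_mult_distrib power_mult)
    finally have A: "(1 + ?r\<^sup>2) ^ ?N \<le> 2 ^ ?N * ?r ^ (2 * ?N)" .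
    have "(c * ?r) ^ (2 * ?N) / W (2 * ?N) \<le> exp (assoc_fn W (c * ?r))"
      using c r1 by (intro assoc_upper[OF W]) auto
    moreover have X: "(c * ?r) ^ (2 * ?N) / W (2 * ?N) > 0" using c r1 Wp by (intro divide_pos_pos zero_less_power mult_pos_pos) auto
    ultimately have "inverse (exp (assoc_fn W (c * ?r))) \<le> inverse ((c * ?r) ^ (2 * ?N) / W (2 * ?N))"
      by (rule le_imp_inverse_le)
    then have B: "exp (- assoc_fn W (c * ?r)) \<le> W (2 * ?N) / (c * ?r) ^ (2 * ?N)"
      by (simp add: exp_minus)
    have "exp (- assoc_fn W (c * ?r)) * (1 + ?r\<^sup>2) ^ ?N \<le> W (2 * ?N) / (c * ?r) ^ (2 * ?N) * (2 ^ ?N * ?r ^ (2 * ?N))"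
      using A B X Wp by (intro mult_mono) auto
    also have "\<dots> = 2 ^ ?N * (W (2 * ?N) / c ^ (2 * ?N))"
    proof -
      have b: "?r ^ (2 * ?N) > 0" using r1 by (intro zero_less_power) linarith
      have a: "c ^ (2 * ?N) > 0" using c by simp
      have g: "\<And>a b w k::real. a > 0 \<Longrightarrow> b > 0 \<Longrightarrow> w / (a * b) * (k * b) = k * (w / a)"
        by (simp add: field_simps)
      show ?thesis unfolding power_mult_distrib using g[OF a b] .
    qed
    also have "\<dots> \<le> ?K" by (intro mult_left_mono) auto
    finally show ?thesis .
  qed
  have pos: "(1 + ?r\<^sup>2) ^ ?N > 0" by (simp add: add_pos_nonneg)
  have "exp (- assoc_fn W (c * ?r)) \<le> ?K / (1 + ?r\<^sup>2) ^ ?N"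
    using key pos by (simp add: pos_le_divide_eq)
  also have "\<dots> = ?K * (1 / (1 + ?r\<^sup>2) ^ ?N)" by simp
  also have "\<dots> \<le> ?K * Pn \<zeta>" by (intro mult_left_mono Pn_lower) auto
  finally show ?thesis .
qed


lemma axd_mult:
  assumes a: "axd j a" and b: "axd j b"
  shows "axd j (\<lambda>\<xi>. a \<xi> * b \<xi>)"
  unfolding axd_def
proof (intro allI)
  fix k x
  let ?S = "\<lambda>\<xi>. (\<Sum>i\<le>k. of_nat (k choose i) * (dlist (replicate i j) a \<xi> * dlist (replicate (k - i) j) b \<xi>))"
  have eq: "dlist (replicate k j) (\<lambda>\<xi>. a \<xi> * b \<xi>) = ?S"
    using leibniz[OF a b, of k] by (intro ext) (simp add: mult.assoc leibniz[OF a b])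
  have "((\<lambda>t. ?S (x + t *\<^sub>R ax j)) has_vector_derivative
     (\<Sum>i\<le>k. of_nat (k choose i) * (dlist (replicate i j) a (x + 0 *\<^sub>R ax j) * dlist (replicate (Suc (k - i)) j) b (x + 0 *\<^sub>R ax j)
        + dlist (replicate (Suc i) j) a (x + 0 *\<^sub>R ax j) * dlist (replicate (k - i) j) b (x + 0 *\<^sub>R ax j)))) (at 0)"
    by (intro has_vector_derivative_sum has_vector_derivative_mult_right
         has_vector_derivative_mult axd_hvd a b)
  then show "(\<lambda>t. dlist (replicate k j) (\<lambda>\<xi>. a \<xi> * b \<xi>) (x + t *\<^sub>R ax j)) differentiable at 0"
    unfolding eq by (rule differentiableI_vector)
qed

lemma partial_transl: "partial i (transl x g) = transl x (partial i g)"
  by (rule ext) (simp add: partial_def transl_def algebra_simps)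

lemma dlist_transl: "dlist ds (transl x f) = transl x (dlist ds f)"
  by (induction ds) (simp_all add: partial_transl)

lemma axd_transl: assumes "axd j f" shows "axd j (transl x f)"
  unfolding axd_def dlist_transl
proof (intro allI)
  fix k y
  have "\<forall>k x. (\<lambda>t. dlist (replicate k j) f (x + t *\<^sub>R ax j)) differentiable at 0" using assms by (simp add: axd_def)
  then have "(\<lambda>t. dlist (replicate k j) f ((y - x) + t *\<^sub>R ax j)) differentiable at 0" by blast
  moreover have "(\<lambda>t. transl x (dlist (replicate k j) f) (y + t *\<^sub>R ax j)) = (\<lambda>t. dlist (replicate k j) f ((y - x) + t *\<^sub>R ax j))"
    by (simp add: transl_def algebra_simps)
  ultimately show "(\<lambda>t. transl x (dlist (replicate k j) f) (y + t *\<^sub>R ax j)) differentiable at 0" by simp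
qed

lemma concat_single:
  assumes "distinct xs"
  shows "concat (map (\<lambda>i. replicate (if i = j then k else 0) i) xs) = (if j \<in> set xs then replicate k j else [])"
  using assms by (induction xs) auto

lemma enum_list_prop: "distinct (enum_list :: 'n::finite list) \<and> set (enum_list :: 'n list) = UNIV"
proof -
  have "\<exists>xs :: 'n list. distinct xs \<and> set xs = UNIV"
    using finite_distinct_list[of "UNIV :: 'n set"] by auto
  then show ?thesis unfolding enum_list_def by (rule someI_ex)
qed

lemma mderiv_single: "mderiv (\<lambda>i::'n::finite. if i = j then k else 0) f = dlist (replicate k j) f"
  unfolding mderiv_def using enum_list_prop[where 'n='n] by (simp add: concat_single)

lemma mlen_single: "mlen (\<lambda>i::'n::finite. if i = j then k else 0) = k"
  unfolding mlen_def by simp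

lemma sin_lower: assumes "0 \<le> x" "x \<le> pi / 3" shows "x / 2 \<le> sin x"
proof -
  have "sin 0 - 0 / 2 \<le> sin x - x / 2"
  proof (rule DERIV_nonneg_imp_nondecreasing[OF assms(1), where f = "\<lambda>y. sin y - y / 2"])
    fix z assume z: "0 \<le> z" "z \<le> x"
    have "cos (pi / 3) \<le> cos z"
      using z assms by (intro cos_monotone_0_pi_le) auto
    then have c: "1 / 2 \<le> cos z" by (simp add: cos_60)
    have "((\<lambda>y. sin y - y / 2) has_real_derivative (cos z - 1 / 2)) (at z)"
      by (auto intro!: derivative_eq_intros)
    with c show "\<exists>d. ((\<lambda>y. sin y - y / 2) has_real_derivative d) (at z) \<and> d \<ge> 0" by force
  qed
  then show ?thesis by simp
qed

lemma cis_minus_one_lower: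
  assumes "p \<ge> 1"
  shows "norm (cis (- (pi / (3 * real p))) - 1) \<ge> 1 / (2 * real p)"
proof -
  let ?x = "pi / (3 * real p)"
  have x0: "0 \<le> ?x" by simp
  have x1: "?x \<le> pi / 3" using assms pi_gt_zero by (simp add: divide_simps)
  have "norm (cis (- ?x) - 1) \<ge> \<bar>Im (cis (- ?x) - 1)\<bar>" by (rule abs_Im_le_cmod)
  also have "\<bar>Im (cis (- ?x) - 1)\<bar> = sin ?x"
  proof -
    have "0 \<le> sin ?x" using x0 x1 pi_gt_zero by (intro sin_ge_zero) linarith+
    then show ?thesis by simp
  qed
  finally have "sin ?x \<le> norm (cis (- ?x) - 1)" .
  moreover have "?x / 2 \<le> sin ?x" by (rule sin_lower[OF x0 x1])
  moreover have "1 / (2 * real p) \<le> ?x / 2" using assms pi_gt3 by (simp add: divide_simps)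
  ultimately show ?thesis by linarith
qed

lemma leib_bound:
  fixes a b :: "real^'n::finite \<Rightarrow> complex"
  assumes W: "weight_seq W" and h: "h > 0"
    and a: "axd j a" and b: "axd j b"
    and Ba: "Ba \<ge> 0" and Bb: "Bb \<ge> 0" and ea: "ea \<ge> 0" and eb: "eb \<ge> 0"
    and ba: "\<And>i. norm (dlist (replicate i j) a \<xi>) \<le> Ba * W i / h ^ i * ea"
    and bb: "\<And>i. norm (dlist (replicate i j) b \<xi>) \<le> Bb * W i / h ^ i * eb"
  shows "norm (dlist (replicate k j) (\<lambda>\<xi>. a \<xi> * b \<xi>) \<xi>) \<le> Ba * Bb * 2 ^ k * W k / h ^ k * (ea * eb)"
proof -
  have "norm (dlist (replicate k j) (\<lambda>\<xi>. a \<xi> * b \<xi>) \<xi>) \<le>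
    (\<Sum>i\<le>k. norm (of_nat (k choose i) * dlist (replicate i j) a \<xi> * dlist (replicate (k - i) j) b \<xi>))"
    unfolding leibniz[OF a b] by (rule norm_sum)
  also have "\<dots> \<le> (\<Sum>i\<le>k. real (k choose i) * (Ba * Bb * W k / h ^ k * (ea * eb)))"
  proof (rule sum_mono)
    fix i assume i: "i \<in> {..k}"
    have "norm (of_nat (k choose i) * dlist (replicate i j) a \<xi> * dlist (replicate (k - i) j) b \<xi>)
       = real (k choose i) * (norm (dlist (replicate i j) a \<xi>) * norm (dlist (replicate (k - i) j) b \<xi>))"
      by (simp add: norm_mult)
    also have "\<dots> \<le> real (k choose i) * ((Ba * W i / h ^ i * ea) * (Bb * W (k - i) / h ^ (k - i) * eb))"
      using ws_pos[OF W] h Ba Bb ea eb by (intro mult_left_mono mult_mono ba bb) (auto intro!: divide_nonneg_pos mult_nonneg_nonneg simp: less_imp_le)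
    also have "\<dots> = real (k choose i) * (Ba * Bb * (W i * W (k - i)) / h ^ k * (ea * eb))"
      using i h by (simp add: field_simps power_add[symmetric])
    also have "\<dots> \<le> real (k choose i) * (Ba * Bb * W k / h ^ k * (ea * eb))"
      using i h Ba Bb ea eb ws_logconv'[OF W, of i k] ws_pos[OF W]
      by (intro mult_left_mono mult_right_mono divide_right_mono) auto
    finally show "norm (of_nat (k choose i) * dlist (replicate i j) a \<xi> * dlist (replicate (k - i) j) b \<xi>)
       \<le> real (k choose i) * (Ba * Bb * W k / h ^ k * (ea * eb))" .
  qed
  also have "\<dots> = 2 ^ k * (Ba * Bb * W k / h ^ k * (ea * eb))"
  proof -
    have "(\<Sum>i\<le>k. real (k choose i)) = 2 ^ k"
      using choose_row_sum[of k] by (metis of_nat_numeral of_nat_power of_nat_sum)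
    then show ?thesis by (simp only: sum_distrib_right[symmetric])
  qed
  finally show ?thesis by (simp add: mult_ac)
qed


lemma decay_from_all_p:
  assumes W: "weight_seq W" and r: "r \<ge> 0" and f: "f \<ge> 0"
    and b: "\<And>p. f \<le> Q * W p / r ^ p"
  shows "f \<le> Q * exp (- assoc_fn W r)"
proof (cases "f = 0")
  case True
  have "Q \<ge> 0" using b[of 0] f ws_0[OF W] by simp
  then show ?thesis using True by simp
next
  case False
  then have fp: "f > 0" using f by simp
  have "exp (assoc_fn W r) \<le> Q / f"
  proof (rule assoc_least[OF W r])
    fix p
    show "r ^ p / W p \<le> Q / f"
    proof (cases "r = 0 \<and> p > 0")
      case True
      have "Q \<ge> 0" using b[of 0] f ws_0[OF W] by simp
      then show ?thesis using True fp ws_pos[OF W, of p] by (simp add: zero_power)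
    next
      case False
      then have rp: "r ^ p > 0" using r by (cases "r = 0") auto
      have Wp: "W p > 0" using ws_pos[OF W] by blast
      have "f * r ^ p \<le> Q * W p" using b[of p] rp by (simp add: pos_le_divide_eq)
      then show ?thesis using rp Wp fp by (simp add: divide_simps mult.commute)
    qed
  qed
  then have "f * exp (assoc_fn W r) \<le> Q" using fp by (simp add: pos_le_divide_eq mult.commute)
  then show ?thesis by (simp add: exp_minus pos_le_divide_eq divide_inverse[symmetric])
qed

lemma shift_exp:
  assumes A: "weight_seq A" and h: "h > 0" and t: "\<bar>t\<bar> \<le> 1"
  shows "exp (- assoc_fn A (h * norm (\<xi> + t *\<^sub>R ax j - y))) \<le> exp (assoc_fn A h) * exp (- assoc_fn A (h / 2 * norm (\<xi> - y)))"
proof -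
  let ?a = "h / 2 * norm (\<xi> + t *\<^sub>R ax j - y)"
  have "norm (\<xi> - y) \<le> norm (\<xi> + t *\<^sub>R ax j - y) + norm (t *\<^sub>R ax j)"
    using norm_triangle_ineq4[of "\<xi> + t *\<^sub>R ax j - y" "t *\<^sub>R ax j"] by (simp add: algebra_simps)
  also have "norm (t *\<^sub>R ax j) \<le> 1" using t by simp
  finally have "h * norm (\<xi> - y) \<le> h * (norm (\<xi> + t *\<^sub>R ax j - y) + 1)" using h by (intro mult_left_mono) auto
  then have "h / 2 * norm (\<xi> - y) \<le> ?a + h / 2" by (simp add: field_simps)
  then have "assoc_fn A (h / 2 * norm (\<xi> - y)) \<le> assoc_fn A (?a + h / 2)"
    using h by (intro assoc_mono[OF A]) auto
  also have "\<dots> \<le> assoc_fn A (2 * ?a) + assoc_fn A (2 * (h / 2))"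
    using h by (intro assoc_tri[OF A]) auto
  finally have "assoc_fn A (h / 2 * norm (\<xi> - y)) \<le> assoc_fn A (h * norm (\<xi> + t *\<^sub>R ax j - y)) + assoc_fn A h"
    by simp
  then show ?thesis by (simp add: exp_add[symmetric])
qed

lemma split_exp:
  assumes A: "weight_seq A" and h: "h > 0"
    and c0: "c0 \<ge> 1" and H: "H \<ge> 1" and m2: "\<And>\<rho>. \<rho> \<ge> 0 \<Longrightarrow> exp (assoc_fn A \<rho>) ^ 2 \<le> c0 * exp (assoc_fn A (H * \<rho>))"
  shows "exp (- assoc_fn A (h / 2 * norm (\<xi> - y))) * exp (- assoc_fn A (h / 2 * norm (\<xi> - x)))
     \<le> c0\<^sup>2 * exp (- assoc_fn A (h / (4 * H) * norm (y - x))) * exp (- assoc_fn A (h / (2 * H) * norm (\<xi> - x)))"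
proof -
  have m2': "exp (- assoc_fn A (H * \<rho>)) \<le> c0 * exp (- assoc_fn A \<rho>) ^ 2" if "\<rho> \<ge> 0" for \<rho>
  proof -
    have "exp (assoc_fn A \<rho>) ^ 2 \<le> c0 * exp (assoc_fn A (H * \<rho>))" using m2 that .
    then have "inverse (c0 * exp (assoc_fn A (H * \<rho>))) \<le> inverse (exp (assoc_fn A \<rho>) ^ 2)"
      by (rule le_imp_inverse_le) simp
    then show ?thesis using c0 
      by (simp add: exp_minus power_inverse field_simps)
  qed
  let ?r1 = "h / (2 * H) * norm (\<xi> - y)" and ?r2 = "h / (2 * H) * norm (\<xi> - x)"
  let ?e1 = "exp (- assoc_fn A ?r1)" and ?e2 = "exp (- assoc_fn A ?r2)"
  have r1: "?r1 \<ge> 0" and r2: "?r2 \<ge> 0" using h H by auto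
  have e1: "exp (- assoc_fn A (h / 2 * norm (\<xi> - y))) \<le> c0 * ?e1 ^ 2"
    using m2'[OF r1] H by simp
  have e2: "exp (- assoc_fn A (h / 2 * norm (\<xi> - x))) \<le> c0 * ?e2 ^ 2"
    using m2'[OF r2] H by simp
  have le1: "?e1 \<le> 1" "?e2 \<le> 1" using assoc_nonneg[OF A] by auto
  have key: "?e1 * ?e2 \<le> exp (- assoc_fn A (h / (4 * H) * norm (y - x)))"
  proof -
    have "norm (y - x) \<le> norm (\<xi> - y) + norm (\<xi> - x)"
      using norm_triangle_ineq4[of "\<xi> - x" "\<xi> - y"] by (simp add: norm_minus_commute algebra_simps)
    then have "norm (y - x) \<le> 2 * max (norm (\<xi> - y)) (norm (\<xi> - x))" by simp
    then have "h / (4 * H) * norm (y - x) \<le> max ?r1 ?r2"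
      using h H by (simp add: field_simps max_def split: if_splits)
    then have "assoc_fn A (h / (4 * H) * norm (y - x)) \<le> assoc_fn A (max ?r1 ?r2)"
      using h H by (intro assoc_mono[OF A]) auto
    also have "\<dots> \<le> assoc_fn A ?r1 + assoc_fn A ?r2"
      using assoc_nonneg[OF A] by (simp add: max_def)
    finally show ?thesis by (simp add: exp_add[symmetric])
  qed
  have "exp (- assoc_fn A (h / 2 * norm (\<xi> - y))) * exp (- assoc_fn A (h / 2 * norm (\<xi> - x)))
      \<le> (c0 * ?e1 ^ 2) * (c0 * ?e2 ^ 2)" using e1 e2 c0 by (intro mult_mono) auto
  also have "\<dots> = c0\<^sup>2 * (?e1 * ?e2) * (?e1 * ?e2)" by (simp add: power2_eq_square mult_ac)
  also have "\<dots> \<le> c0\<^sup>2 * exp (- assoc_fn A (h / (4 * H) * norm (y - x))) * ?e2"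
    using key le1 by (intro mult_mono mult_left_mono) (auto simp: mult_le_one)
  finally show ?thesis .
qed


lemma main_est:
  fixes psi chi :: "real^'n::finite \<Rightarrow> complex" and yl x x' :: "real^'n"
  assumes M: "weight_seq M" and A: "weight_seq A" and h: "h > 0"
    and spsi: "smooth_fn psi" and schi: "smooth_fn chi"
    and Bpsi: "Bpsi \<ge> 0" and Bchi: "Bchi \<ge> 0"
    and bpsi: "\<And>j k \<xi>. norm (dlist (replicate k j) psi \<xi>) \<le> Bpsi * M k / h ^ k * exp (- assoc_fn A (h * norm (\<xi> - yl)))"
    and bchi: "\<And>j k \<xi>. norm (dlist (replicate k j) chi \<xi>) \<le> Bchi * M k / h ^ k * exp (- assoc_fn A (h * norm \<xi>))"
    and c0A: "c0A \<ge> 1" and HA: "HA \<ge> 1"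
    and m2A: "\<And>\<rho>. \<rho> \<ge> 0 \<Longrightarrow> exp (assoc_fn A \<rho>) ^ 2 \<le> c0A * exp (assoc_fn A (HA * \<rho>))"
  shows "norm (inv_fourier (\<lambda>\<xi>. psi \<xi> * transl x chi \<xi>) x') \<le>
    (Bpsi * Bchi * exp (2 * assoc_fn A h) * c0A\<^sup>2 *
      (2 ^ CARD('n) * max 1 (A (2 * CARD('n)) / (h / (2 * HA)) ^ (2 * CARD('n)))) *
      integral\<^sup>L lborel (Pn :: real^'n \<Rightarrow> real))
    * exp (- assoc_fn A (h / (4 * HA) * norm (yl - x)))
    * exp (assoc_fn M (3 * h / 2)) * exp (- assoc_fn M (3 * h / 2 * norm x' / real CARD('n)))"
proof -
  define g where "g = (\<lambda>\<xi>. psi \<xi> * transl x chi \<xi>)"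
  define KA where "KA = (2 ^ CARD('n) * max 1 (A (2 * CARD('n)) / (h / (2 * HA)) ^ (2 * CARD('n))))"
  define IP where "IP = integral\<^sup>L lborel (Pn :: real^'n \<Rightarrow> real)"
  define Ex where "Ex = exp (- assoc_fn A (h / (4 * HA) * norm (yl - x)))"
  define Q0 where "Q0 = Bpsi * Bchi * exp (2 * assoc_fn A h) * c0A\<^sup>2 * KA"
  define V where "V k \<xi> = Q0 * 2 ^ k * M k / h ^ k * Ex * Pn (\<xi> - x)" for k \<xi>
  have KA0: "KA \<ge> 0" unfolding KA_def by simp
  have Q0: "Q0 \<ge> 0" unfolding Q0_def using Bpsi Bchi KA0 by simp
  have Ex0: "Ex \<ge> 0" unfolding Ex_def by simp
  have IP0: "IP \<ge> 0" unfolding IP_def by (rule Bochner_Integration.integral_nonneg) (simp add: Pn_pos less_imp_le)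
  have Mp: "\<And>k. M k > 0" using ws_pos[OF M] by blast
  have V0: "V k \<xi> \<ge> 0" for k \<xi>
    unfolding V_def using Q0 Ex0 Mp[of k] h Pn_pos[of "\<xi> - x"] by (simp add: less_imp_le)
  have axg: "axd j g" for j
    unfolding g_def by (intro axd_mult smooth_axd spsi axd_transl schi)
  have Vb: "norm (dlist (replicate k j) g (\<xi> + t *\<^sub>R ax j)) \<le> V k \<xi>" if t: "\<bar>t\<bar> \<le> 1" for k j \<xi> t
  proof -
    let ?z = "\<xi> + t *\<^sub>R ax j"
    let ?ea = "exp (- assoc_fn A (h * norm (?z - yl)))" and ?eb = "exp (- assoc_fn A (h * norm (?z - x)))"
    have n1: "norm (dlist (replicate k j) g ?z) \<le> Bpsi * Bchi * 2 ^ k * M k / h ^ k * (?ea * ?eb)"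
      unfolding g_def
    proof (rule leib_bound[OF M h smooth_axd[OF spsi] axd_transl[OF smooth_axd[OF schi]] Bpsi Bchi])
      fix i
      show "norm (dlist (replicate i j) psi ?z) \<le> Bpsi * M i / h ^ i * ?ea" by (rule bpsi)
      show "norm (dlist (replicate i j) (transl x chi) ?z) \<le> Bchi * M i / h ^ i * ?eb"
        unfolding dlist_transl by (unfold transl_def) (rule bchi)
    qed auto
    have "?ea * ?eb \<le> (exp (assoc_fn A h) * exp (- assoc_fn A (h / 2 * norm (\<xi> - yl)))) *
                          (exp (assoc_fn A h) * exp (- assoc_fn A (h / 2 * norm (\<xi> - x))))"
      by (intro mult_mono shift_exp[OF A h t]) auto
    also have "\<dots> = exp (2 * assoc_fn A h) * (exp (- assoc_fn A (h / 2 * norm (\<xi> - yl))) * exp (- assoc_fn A (h / 2 * norm (\<xi> - x))))"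
      by (simp add: exp_add[symmetric] mult_ac)
    also have "\<dots> \<le> exp (2 * assoc_fn A h) * (c0A\<^sup>2 * Ex * exp (- assoc_fn A (h / (2 * HA) * norm (\<xi> - x))))"
      unfolding Ex_def by (intro mult_left_mono split_exp[OF A h c0A HA m2A]) auto
    also have "\<dots> \<le> exp (2 * assoc_fn A h) * (c0A\<^sup>2 * Ex * (KA * Pn (\<xi> - x)))"
      unfolding KA_def using Ex0 h HA
      by (intro mult_left_mono assoc_decay_Pn[OF A]) auto
    finally have e: "?ea * ?eb \<le> exp (2 * assoc_fn A h) * (c0A\<^sup>2 * Ex * (KA * Pn (\<xi> - x)))" .
    have C: "Bpsi * Bchi * 2 ^ k * M k / h ^ k \<ge> 0" using Bpsi Bchi Mp[of k] h by simp
    have "norm (dlist (replicate k j) g ?z) \<le> Bpsi * Bchi * 2 ^ k * M k / h ^ k * (exp (2 * assoc_fn A h) * (c0A\<^sup>2 * Ex * (KA * Pn (\<xi> - x))))"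
      using order_trans[OF n1 mult_left_mono[OF e C]] .
    then show ?thesis by (simp add: V_def Q0_def mult_ac)
  qed
  have Vint: "integrable lborel (V k)" for k
    unfolding V_def by (intro integrable_mult_right Pn_translate_integrable)
  have Vintegral: "integral\<^sup>L lborel (V k) = Q0 * 2 ^ k * M k / h ^ k * Ex * IP" for k
    unfolding V_def IP_def by (simp add: Pn_translate_integral)
  have gcont: "continuous_on UNIV g"
  proof -
    have c1: "continuous_on UNIV psi" using spsi unfolding smooth_fn_def by (metis dlist.simps(1))
    have c2: "continuous_on UNIV chi" using schi unfolding smooth_fn_def by (metis dlist.simps(1))
    have "continuous_on UNIV (\<lambda>\<xi>. chi (\<xi> - x))"
      by (rule continuous_on_compose2[OF c2]) (auto intro!: continuous_intros)
    then show ?thesis unfolding g_def transl_def by (intro continuous_intros c1)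
  qed
  have gmeas: "g \<in> borel_measurable lborel"
    using gcont by (simp add: borel_measurable_continuous_onI)
  have gb: "norm (g \<xi>) \<le> V 0 \<xi>" for \<xi>
    using Vb[of 0 0 _ \<xi>] by simp
  have gint: "integrable lborel g"
    by (rule Bochner_Integration.integrable_bound[OF Vint[of 0] gmeas]) (use gb V0 in auto)
  have Fb: "norm (inv_fourier g x') \<le> (Q0 * Ex * IP) * M p / (3 * h / 2 * \<bar>x' $ j\<bar>) ^ p"
    if xj: "\<bar>x' $ j\<bar> \<ge> 1" for j p
  proof (cases "p = 0")
    case True
    have "norm (inv_fourier g x') \<le> integral\<^sup>L lborel (\<lambda>\<xi>. norm (g \<xi>))" by (rule inv_fourier_norm)
    also have "\<dots> \<le> integral\<^sup>L lborel (V 0)" by (rule integral_mono') (use Vint gb V0 in auto)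
    finally show ?thesis using True ws_0[OF M] by (simp add: Vintegral mult_ac)
  next
    case False
    then have p1: "p \<ge> 1" by simp
    define r where "r = x' $ j"
    have r1: "\<bar>r\<bar> \<ge> 1" using xj r_def by simp
    define s where "s = 1 / (6 * real p * r)"
    define v where "v = s *\<^sub>R ax j"
    have xv: "2 * pi * (x' \<bullet> v) = pi / (3 * real p)"
      using r1 p1 unfolding v_def s_def r_def by (simp add: inner_axis field_simps)
    have ps: "real p * \<bar>s\<bar> \<le> 1"
      using r1 p1 unfolding s_def by (simp add: abs_mult field_simps)
    have pw: "norm (ndiff v p g \<xi>) \<le> \<bar>s\<bar> ^ p * V p \<xi>" for \<xi>
    proof -
      have "ndiff v p g \<xi> = fdiff s p (\<lambda>t. g (\<xi> + t *\<^sub>R ax j)) 0"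
        using ndiff_fdiff[of s j p g \<xi> 0] by (simp add: v_def)
      also have "(\<lambda>t. g (\<xi> + t *\<^sub>R ax j)) = (\<lambda>k t. dlist (replicate k j) g (\<xi> + t *\<^sub>R ax j)) 0"
        by simp
      finally have eq: "ndiff v p g \<xi> = fdiff s p ((\<lambda>k t. dlist (replicate k j) g (\<xi> + t *\<^sub>R ax j)) 0) 0" .
      have "norm (fdiff s p ((\<lambda>k t. dlist (replicate k j) g (\<xi> + t *\<^sub>R ax j)) 0) 0) \<le> \<bar>s\<bar> ^ p * V p \<xi>"
      proof (rule fdiff_bound)
        fix k t show "((\<lambda>t. dlist (replicate k j) g (\<xi> + t *\<^sub>R ax j)) has_vector_derivative
            dlist (replicate (Suc k) j) g (\<xi> + t *\<^sub>R ax j)) (at t)" by (rule axd_hvd[OF axg])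
      next
        fix t assume "\<bar>t - 0\<bar> \<le> real p * \<bar>s\<bar>"
        then have "\<bar>t\<bar> \<le> 1" using ps by simp
        then show "norm (dlist (replicate p j) g (\<xi> + t *\<^sub>R ax j)) \<le> V p \<xi>" by (rule Vb)
      qed
      then show ?thesis using eq by simp
    qed
    have nd: "integrable lborel (ndiff v p g) \<and>
      inv_fourier (ndiff v p g) x' = (cis (- (2 * pi * (x' \<bullet> v))) - 1) ^ p * inv_fourier g x'"
      by (rule ndiff_fourier[OF gint])
    have c: "norm (cis (- (2 * pi * (x' \<bullet> v))) - 1) \<ge> 1 / (2 * real p)"
      unfolding xv by (rule cis_minus_one_lower[OF p1])
    have "(1 / (2 * real p)) ^ p * norm (inv_fourier g x') \<le> norm (cis (- (2 * pi * (x' \<bullet> v))) - 1) ^ p * norm (inv_fourier g x')"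
      using c p1 by (intro mult_right_mono power_mono) auto
    also have "\<dots> = norm (inv_fourier (ndiff v p g) x')" using nd by (simp add: norm_mult norm_power)
    also have "\<dots> \<le> integral\<^sup>L lborel (\<lambda>\<xi>. norm (ndiff v p g \<xi>))" by (rule inv_fourier_norm)
    also have "\<dots> \<le> integral\<^sup>L lborel (\<lambda>\<xi>. \<bar>s\<bar> ^ p * V p \<xi>)"
      by (rule integral_mono') (use Vint pw V0 in auto)
    also have "\<dots> = \<bar>s\<bar> ^ p * (Q0 * 2 ^ p * M p / h ^ p * Ex * IP)"
      using Vintegral by simp
    finally have F1: "(1 / (2 * real p)) ^ p * norm (inv_fourier g x') \<le> \<bar>s\<bar> ^ p * (Q0 * 2 ^ p * M p / h ^ p * Ex * IP)" .
    have pp: "(1 / (2 * real p)) ^ p > 0" using p1 by simp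
    have "norm (inv_fourier g x') \<le> (2 * real p * \<bar>s\<bar>) ^ p * (Q0 * 2 ^ p * M p / h ^ p * Ex * IP)"
      using F1 pp p1 by (simp add: power_mult_distrib field_simps)
    also have "(2 * real p * \<bar>s\<bar>) = 1 / (3 * \<bar>r\<bar>)"
      using p1 r1 unfolding s_def by (simp add: abs_mult field_simps)
    also have "(1 / (3 * \<bar>r\<bar>)) ^ p * (Q0 * 2 ^ p * M p / h ^ p * Ex * IP) = (Q0 * Ex * IP) * M p / (3 * h / 2 * \<bar>r\<bar>) ^ p"
      using h r1 by (simp add: power_mult_distrib power_divide field_simps)
    finally show ?thesis unfolding r_def .
  qed
  let ?Q1 = "Q0 * Ex * IP"
  have Q1: "?Q1 \<ge> 0" using Q0 Ex0 IP0 by simp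
  have F0: "norm (inv_fourier g x') \<le> ?Q1"
  proof -
    have "norm (inv_fourier g x') \<le> integral\<^sup>L lborel (\<lambda>\<xi>. norm (g \<xi>))" by (rule inv_fourier_norm)
    also have "\<dots> \<le> integral\<^sup>L lborel (V 0)" by (rule integral_mono') (use Vint gb V0 in auto)
    finally show ?thesis using ws_0[OF M] by (simp add: Vintegral mult_ac)
  qed
  have Fj: "norm (inv_fourier g x') \<le> ?Q1 * exp (- assoc_fn M (3 * h / 2 * \<bar>x' $ j\<bar>))"
    if xj: "\<bar>x' $ j\<bar> \<ge> 1" for j
    by (rule decay_from_all_p[OF M]) (use h Fb[OF xj] in auto)
  define N where "N = real CARD('n)"
  have N0: "N > 0" unfolding N_def by simp
  obtain j where jmax: "\<And>i. \<bar>x' $ i\<bar> \<le> \<bar>x' $ j\<bar>"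
  proof -
    let ?m = "Max (range (\<lambda>i. \<bar>x' $ i\<bar>))"
    have "?m \<in> range (\<lambda>i. \<bar>x' $ i\<bar>)" by (intro Max_in) auto
    then obtain j where "\<bar>x' $ j\<bar> = ?m" by (metis (no_types, lifting) imageE)
    moreover have "\<bar>x' $ i\<bar> \<le> ?m" for i by (intro Max_ge) auto
    ultimately show ?thesis using that by metis
  qed
  have nx: "norm x' \<le> N * \<bar>x' $ j\<bar>"
  proof -
    have "norm x' \<le> (\<Sum>i\<in>UNIV. \<bar>x' $ i\<bar>)" by (rule norm_le_l1_cart)
    also have "\<dots> \<le> of_nat (card (UNIV :: 'n set)) * \<bar>x' $ j\<bar>" by (rule sum_bounded_above) (use jmax in auto)
    finally show ?thesis unfolding N_def by simp
  qed
  have nx': "3 * h / 2 * norm x' / N \<le> 3 * h / 2 * \<bar>x' $ j\<bar>"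
    using nx N0 h by (simp add: field_simps)
  have goal: "norm (inv_fourier g x') \<le> ?Q1 * exp (assoc_fn M (3 * h / 2)) * exp (- assoc_fn M (3 * h / 2 * norm x' / N))"
  proof (cases "\<bar>x' $ j\<bar> \<ge> 1")
    case True
    have "norm (inv_fourier g x') \<le> ?Q1 * exp (- assoc_fn M (3 * h / 2 * \<bar>x' $ j\<bar>))" by (rule Fj[OF True])
    also have "\<dots> \<le> ?Q1 * exp (- assoc_fn M (3 * h / 2 * norm x' / N))"
      using nx' h N0 Q1 by (intro mult_left_mono) (auto intro!: assoc_mono[OF M])
    also have "\<dots> \<le> ?Q1 * exp (assoc_fn M (3 * h / 2)) * exp (- assoc_fn M (3 * h / 2 * norm x' / N))"
      using Q1 assoc_nonneg[OF M] by (intro mult_right_mono) (auto intro: mult_le_cancel_left1[THEN iffD2])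
    finally show ?thesis .
  next
    case False
    have "3 * h / 2 * \<bar>x' $ j\<bar> \<le> 3 * h / 2 * 1" by (rule mult_left_mono) (use False h in auto)
    then have "3 * h / 2 * norm x' / N \<le> 3 * h / 2" using nx' by linarith
    then have "assoc_fn M (3 * h / 2 * norm x' / N) \<le> assoc_fn M (3 * h / 2)"
      using h N0 by (intro assoc_mono[OF M]) auto
    then have "1 \<le> exp (assoc_fn M (3 * h / 2)) * exp (- assoc_fn M (3 * h / 2 * norm x' / N))"
      by (simp add: exp_add[symmetric])
    then have "?Q1 \<le> ?Q1 * (exp (assoc_fn M (3 * h / 2)) * exp (- assoc_fn M (3 * h / 2 * norm x' / N)))"
      using Q1 by (simp add: mult_le_cancel_left1)
    then show ?thesis using F0 by (simp add: mult.assoc)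
  qed
  have "?Q1 = (Q0 * IP) * Ex" by (simp only: mult_ac)
  from goal[unfolded this] show ?thesis
    unfolding g_def N_def Q0_def Ex_def IP_def KA_def .
qed


lemma bound_from_S:
  assumes W: "weight_seq W" and h: "h > 0"
    and B: "\<And>\<alpha> x. h ^ mlen \<alpha> * norm (mderiv \<alpha> f x) * exp (assoc_fn A (h * norm (x - c))) / W (mlen \<alpha>) \<le> B"
  shows "norm (dlist (replicate k j) f \<xi>) \<le> B * W k / h ^ k * exp (- assoc_fn A (h * norm (\<xi> - c)))"
    and "B \<ge> 0"
proof -
  have Wk: "W k > 0" using ws_pos[OF W] by blast
  have Bk: "h ^ k * norm (dlist (replicate k j) f \<xi>) * exp (assoc_fn A (h * norm (\<xi> - c))) / W k \<le> B" for k
    using B[of "\<lambda>i. if i = j then k else 0" \<xi>] by (simp only: mderiv_single mlen_single)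
  have "h ^ k * norm (dlist (replicate k j) f \<xi>) * exp (assoc_fn A (h * norm (\<xi> - c))) / W k \<le> B" by (rule Bk)
  then have "norm (dlist (replicate k j) f \<xi>) \<le> B * W k / (h ^ k * exp (assoc_fn A (h * norm (\<xi> - c))))"
    using Wk h by (simp add: field_simps)
  then show "norm (dlist (replicate k j) f \<xi>) \<le> B * W k / h ^ k * exp (- assoc_fn A (h * norm (\<xi> - c)))"
    by (simp add: exp_minus divide_inverse mult_ac)
  have "0 \<le> h ^ 0 * norm (dlist (replicate 0 j) f \<xi>) * exp (assoc_fn A (h * norm (\<xi> - c))) / W 0"
    using W by (simp add: ws_0)
  also have "\<dots> \<le> B"
    by (rule Bk)
  finally show "B \<ge> 0" .
qed

lemma bound_lower:
  assumes A: "weight_seq A" and W: "weight_seq W" and h2: "0 < h2" "h2 \<le> h" and B: "B \<ge> 0"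
    and b: "n \<le> B * W k / h ^ k * exp (- assoc_fn A (h * r))" and r: "r \<ge> 0"
  shows "n \<le> B * W k / h2 ^ k * exp (- assoc_fn A (h2 * r))"
proof -
  have Wk: "W k > 0" using ws_pos[OF W] by blast
  have "B * W k / h ^ k \<le> B * W k / h2 ^ k"
    using h2 B Wk by (intro divide_left_mono power_mono mult_nonneg_nonneg) auto
  moreover have "exp (- assoc_fn A (h * r)) \<le> exp (- assoc_fn A (h2 * r))"
    using h2 r by (simp add: assoc_mono[OF A] mult_right_mono)
  ultimately have "B * W k / h ^ k * exp (- assoc_fn A (h * r)) \<le> B * W k / h2 ^ k * exp (- assoc_fn A (h2 * r))"
    using h2 B Wk by (intro mult_mono) auto
  with b show ?thesis by linarith
qed

lemma m2_inv:
  assumes c0: "c0 \<ge> 1" and m2: "\<And>\<rho>. \<rho> \<ge> 0 \<Longrightarrow> exp (assoc_fn A \<rho>) ^ 2 \<le> c0 * exp (assoc_fn A (H * \<rho>))"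
    and r: "\<rho> \<ge> 0"
  shows "exp (- assoc_fn A (H * \<rho>)) \<le> c0 * exp (- assoc_fn A \<rho>) ^ 2"
proof -
  have "exp (assoc_fn A \<rho>) ^ 2 \<le> c0 * exp (assoc_fn A (H * \<rho>))" using m2 r .
  then have "inverse (c0 * exp (assoc_fn A (H * \<rho>))) \<le> inverse (exp (assoc_fn A \<rho>) ^ 2)"
    by (rule le_imp_inverse_le) simp
  then show ?thesis using c0 by (simp add: exp_minus power_inverse field_simps)
qed

lemma Pn_nn_integral: "(\<integral>\<^sup>+x. ennreal (c * Pn (x::real^'n::finite)) \<partial>lborel) = ennreal (c * integral\<^sup>L lborel (Pn :: real^'n \<Rightarrow> real))"
  if c: "c \<ge> 0"
proof -
  have "(\<integral>\<^sup>+x. ennreal (c * Pn (x::real^'n)) \<partial>lborel) = ennreal (integral\<^sup>L lborel (\<lambda>x. c * Pn (x::real^'n)))"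
    by (rule nn_integral_eq_integral) (use c Pn_integrable in \<open>auto simp: Pn_pos[THEN less_imp_le] intro!: AE_I2 mult_nonneg_nonneg\<close>)
  then show ?thesis by simp
qed


lemma core:
  fixes psi :: "'l \<Rightarrow> real^'n::finite \<Rightarrow> complex" and y :: "'l \<Rightarrow> real^'n"
    and chi :: "real^'n \<Rightarrow> complex" and \<eta> :: "real^'n \<Rightarrow> real" and K :: "(real^'n) set"
  assumes M: "weight_seq M" and A: "weight_seq A" and h: "h > 0"
    and c0A: "c0A \<ge> 1" and HA: "HA \<ge> 1"
    and m2A: "\<And>\<rho>. \<rho> \<ge> 0 \<Longrightarrow> exp (assoc_fn A \<rho>) ^ 2 \<le> c0A * exp (assoc_fn A (HA * \<rho>))"
    and c0M: "c0M \<ge> 1" and HM: "HM \<ge> 1"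
    and m2M: "\<And>\<rho>. \<rho> \<ge> 0 \<Longrightarrow> exp (assoc_fn M \<rho>) ^ 2 \<le> c0M * exp (assoc_fn M (HM * \<rho>))"
    and R: "R \<ge> 0" and KR: "\<And>\<kappa>. \<kappa> \<in> K \<Longrightarrow> norm \<kappa> \<le> R"
    and spsi: "\<And>l. l \<in> \<Lambda> \<Longrightarrow> smooth_fn (psi l)" and schi: "smooth_fn chi"
    and Bpsi: "Bpsi \<ge> 0" and Bchi: "Bchi \<ge> 0"
    and bpsi: "\<And>l j k \<xi>. l \<in> \<Lambda> \<Longrightarrow> norm (dlist (replicate k j) (psi l) \<xi>) \<le> Bpsi * M k / h ^ k * exp (- assoc_fn A (h * norm (\<xi> - y l)))"
    and bchi: "\<And>j k \<xi>. norm (dlist (replicate k j) chi \<xi>) \<le> Bchi * M k / h ^ k * exp (- assoc_fn A (h * norm \<xi>))"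
    and \<eta>pos: "\<And>x. \<eta> x > 0" and C\<eta>: "C\<eta> > 0" and \<tau>: "\<tau> > 0"
    and \<eta>b: "\<And>x z. \<eta> (x + z) \<le> C\<eta> * \<eta> x * exp (assoc_fn M (\<tau> * norm z))"
    and h\<tau>: "HM * \<tau> \<le> 3 * h / 2 / real CARD('n)"
  shows "\<exists>C'\<ge>1. \<forall>l\<in>\<Lambda>. \<forall>m\<in>\<Lambda>.
            (SUP x\<in>(+) (y m) ` K. FL1_norm \<eta> (\<lambda>\<xi>. psi l \<xi> * transl x chi \<xi>))
              \<le> ennreal (C' * exp (- assoc_fn A (h / (8 * HA) * norm (y l - y m))))"
proof -
  define N where "N = real CARD('n)"
  have N0: "N > 0" unfolding N_def by simp
  define KA where "KA = (2 ^ CARD('n) * max 1 (A (2 * CARD('n)) / (h / (2 * HA)) ^ (2 * CARD('n))))"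
  define IP where "IP = integral\<^sup>L lborel (Pn :: real^'n \<Rightarrow> real)"
  define Qm where "Qm = Bpsi * Bchi * exp (2 * assoc_fn A h) * c0A\<^sup>2 * KA * IP"
  define KM where "KM = (2 ^ CARD('n) * max 1 (M (2 * CARD('n)) / \<tau> ^ (2 * CARD('n))))"
  define Cf where "Cf = C\<eta> * \<eta> 0 * Qm * exp (assoc_fn M (3 * h / 2)) * c0M * KM * IP"
  have KA0: "KA \<ge> 0" unfolding KA_def by simp
  have KM0: "KM \<ge> 0" unfolding KM_def by simp
  have IP0: "IP \<ge> 0" unfolding IP_def by (rule Bochner_Integration.integral_nonneg) (simp add: Pn_pos less_imp_le)
  have Qm0: "Qm \<ge> 0" unfolding Qm_def using Bpsi Bchi KA0 IP0 by simp
  have Cf0: "Cf \<ge> 0" unfolding Cf_def using C\<eta> \<eta>pos[of 0] Qm0 c0M KM0 IP0 by simp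
  have mainb: "norm (inv_fourier (\<lambda>\<xi>. psi l \<xi> * transl x chi \<xi>) x') \<le>
      Qm * exp (- assoc_fn A (h / (4 * HA) * norm (y l - x))) * exp (assoc_fn M (3 * h / 2))
        * exp (- assoc_fn M (3 * h / 2 * norm x' / N))" if l: "l \<in> \<Lambda>" for l x x'
    unfolding Qm_def KA_def IP_def N_def
    by (rule main_est[OF M A h spsi[OF l] schi Bpsi Bchi bpsi[OF l] bchi c0A HA m2A])
  have FL: "FL1_norm \<eta> (\<lambda>\<xi>. psi l \<xi> * transl x chi \<xi>) \<le> ennreal (Cf * exp (- assoc_fn A (h / (4 * HA) * norm (y l - x))))"
    if l: "l \<in> \<Lambda>" for l x
  proof -
    let ?Ex = "exp (- assoc_fn A (h / (4 * HA) * norm (y l - x)))"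
    let ?C = "C\<eta> * \<eta> 0 * Qm * ?Ex * exp (assoc_fn M (3 * h / 2)) * c0M * KM"
    have C0: "?C \<ge> 0" using C\<eta> \<eta>pos[of 0] Qm0 c0M KM0 by simp
    have pt: "\<eta> x' * norm (inv_fourier (\<lambda>\<xi>. psi l \<xi> * transl x chi \<xi>) x') \<le> ?C * Pn x'" for x'
    proof -
      let ?r = "\<tau> * norm x'"
      have r0: "?r \<ge> 0" using \<tau> by simp
      have e1: "\<eta> x' \<le> C\<eta> * \<eta> 0 * exp (assoc_fn M ?r)" using \<eta>b[of 0 x'] by simp
      have "HM * ?r = (HM * \<tau>) * norm x'" by simp
      also have "\<dots> \<le> (3 * h / 2 / N) * norm x'" using h\<tau> by (intro mult_right_mono) (auto simp: N_def)
      also have "\<dots> = 3 * h / 2 * norm x' / N" by simp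
      finally have "HM * ?r \<le> 3 * h / 2 * norm x' / N" .
      then have "exp (- assoc_fn M (3 * h / 2 * norm x' / N)) \<le> exp (- assoc_fn M (HM * ?r))"
        using HM r0 by (simp add: assoc_mono[OF M])
      also have "\<dots> \<le> c0M * exp (- assoc_fn M ?r) ^ 2" by (rule m2_inv[OF c0M m2M r0])
      finally have e2: "exp (- assoc_fn M (3 * h / 2 * norm x' / N)) \<le> c0M * exp (- assoc_fn M ?r) ^ 2" .
      have e3: "exp (- assoc_fn M ?r) \<le> KM * Pn x'"
        unfolding KM_def using assoc_decay_Pn[OF M \<tau>, of x'] by simp
      have "\<eta> x' * norm (inv_fourier (\<lambda>\<xi>. psi l \<xi> * transl x chi \<xi>) x') \<le>
          (C\<eta> * \<eta> 0 * exp (assoc_fn M ?r)) * (Qm * ?Ex * exp (assoc_fn M (3 * h / 2)) * (c0M * exp (- assoc_fn M ?r) ^ 2))"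
      proof (rule mult_mono[OF e1])
        show "norm (inv_fourier (\<lambda>\<xi>. psi l \<xi> * transl x chi \<xi>) x') \<le> Qm * ?Ex * exp (assoc_fn M (3 * h / 2)) * (c0M * exp (- assoc_fn M ?r) ^ 2)"
          using order_trans[OF mainb[OF l] mult_left_mono[OF e2]] Qm0 by simp
      qed (use C\<eta> \<eta>pos[of 0] in auto)
      also have "\<dots> = (C\<eta> * \<eta> 0 * Qm * ?Ex * exp (assoc_fn M (3 * h / 2)) * c0M) * exp (- assoc_fn M ?r)"
        by (simp add: power2_eq_square exp_minus field_simps)
      also have "\<dots> \<le> (C\<eta> * \<eta> 0 * Qm * ?Ex * exp (assoc_fn M (3 * h / 2)) * c0M) * (KM * Pn x')"
        using C\<eta> \<eta>pos[of 0] Qm0 c0M by (intro mult_left_mono e3) auto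
      finally show ?thesis by (simp add: mult_ac)
    qed
    have "FL1_norm \<eta> (\<lambda>\<xi>. psi l \<xi> * transl x chi \<xi>) \<le> (\<integral>\<^sup>+x'. ennreal (?C * Pn (x'::real^'n)) \<partial>lborel)"
      unfolding FL1_norm_def by (rule nn_integral_mono) (rule ennreal_leI[OF pt])
    also have "\<dots> = ennreal (?C * IP)" unfolding IP_def by (rule Pn_nn_integral[OF C0])
    also have "?C * IP = Cf * ?Ex" unfolding Cf_def by (simp add: mult_ac)
    finally show ?thesis .
  qed
  define h' where "h' = h / (8 * HA)"
  have h'0: "h' > 0" unfolding h'_def using h HA by simp
  define C' where "C' = max 1 (Cf * exp (assoc_fn A (2 * h' * R)))"
  show ?thesis
  proof (intro exI[of _ C'] conjI ballI)
    show "C' \<ge> 1" unfolding C'_def by simp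
    fix l m assume l: "l \<in> \<Lambda>" and m: "m \<in> \<Lambda>"
    show "(SUP x\<in>(+) (y m) ` K. FL1_norm \<eta> (\<lambda>\<xi>. psi l \<xi> * transl x chi \<xi>))
              \<le> ennreal (C' * exp (- assoc_fn A (h / (8 * HA) * norm (y l - y m))))"
    proof (rule SUP_least)
      fix x assume "x \<in> (+) (y m) ` K"
      then obtain \<kappa> where \<kappa>: "\<kappa> \<in> K" and x: "x = y m + \<kappa>" by auto
      have "norm (y l - y m) \<le> norm (y l - x) + norm \<kappa>"
        using norm_triangle_ineq[of "y l - x" \<kappa>] x by (simp add: algebra_simps)
      also have "\<dots> \<le> norm (y l - x) + R" using KR[OF \<kappa>] by simp
      finally have "h' * norm (y l - y m) \<le> h' * norm (y l - x) + h' * R"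
        using h'0 by (simp add: mult_left_mono distrib_left[symmetric])
      then have "assoc_fn A (h' * norm (y l - y m)) \<le> assoc_fn A (h' * norm (y l - x) + h' * R)"
        using h'0 by (intro assoc_mono[OF A]) auto
      also have "\<dots> \<le> assoc_fn A (2 * (h' * norm (y l - x))) + assoc_fn A (2 * (h' * R))"
        using h'0 R by (intro assoc_tri[OF A]) auto
      finally have a: "assoc_fn A (h' * norm (y l - y m)) \<le> assoc_fn A (h / (4 * HA) * norm (y l - x)) + assoc_fn A (2 * h' * R)"
        unfolding h'_def by (simp add: mult_ac)
      have "Cf * exp (- assoc_fn A (h / (4 * HA) * norm (y l - x))) \<le> Cf * (exp (assoc_fn A (2 * h' * R)) * exp (- assoc_fn A (h' * norm (y l - y m))))"
        using a Cf0 by (intro mult_left_mono) (auto simp: exp_add[symmetric])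
      also have "\<dots> \<le> C' * exp (- assoc_fn A (h' * norm (y l - y m)))"
        unfolding C'_def by (simp add: mult.assoc[symmetric] mult_right_mono)
      finally have b: "Cf * exp (- assoc_fn A (h / (4 * HA) * norm (y l - x))) \<le> C' * exp (- assoc_fn A (h / (8 * HA) * norm (y l - y m)))"
        unfolding h'_def .
      show "FL1_norm \<eta> (\<lambda>\<xi>. psi l \<xi> * transl x chi \<xi>) \<le> ennreal (C' * exp (- assoc_fn A (h / (8 * HA) * norm (y l - y m))))"
        using FL[OF l, of x] b ennreal_leI order_trans by blast
    qed
  qed
qed


theorem lemma3p7:
  fixes beurling :: bool
    and M A :: "nat \<Rightarrow> real"
    and \<eta> :: "real^'n::finite \<Rightarrow> real"
    and K :: "(real^'n) set"
    and chi :: "real^'n \<Rightarrow> complex"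
    and \<Lambda> :: "'l set"
    and \<psi> :: "'l \<Rightarrow> real^'n \<Rightarrow> complex"
    and y :: "'l \<Rightarrow> real^'n"
  assumes "weight_seq M" and "weight_seq A" and "seq_M2star A"
    and "weight_class beurling M \<eta>"
    and "compact K"
    and "in_S beurling M A chi"
    and "UCPU beurling M A \<Lambda> \<psi> y"
  shows "(if beurling then (\<forall>h'>0. \<exists>C'\<ge>1. \<forall>l\<in>\<Lambda>. \<forall>m\<in>\<Lambda>.
            (SUP x\<in>(+) (y m) ` K. FL1_norm \<eta> (\<lambda>\<xi>. \<psi> l \<xi> * transl x chi \<xi>))
              \<le> ennreal (C' * exp (- assoc_fn A (h' * norm (y l - y m)))))
         else (\<exists>h'>0. \<exists>C'\<ge>1. \<forall>l\<in>\<Lambda>. \<forall>m\<in>\<Lambda>.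
            (SUP x\<in>(+) (y m) ` K. FL1_norm \<eta> (\<lambda>\<xi>. \<psi> l \<xi> * transl x chi \<xi>))
              \<le> ennreal (C' * exp (- assoc_fn A (h' * norm (y l - y m))))))"
proof -
  note M = assms(1) and A = assms(2)
  obtain c0A HA where c0A: "c0A \<ge> 1" and HA: "HA \<ge> 1"
    and m2A: "\<And>\<rho>. \<rho> \<ge> 0 \<Longrightarrow> exp (assoc_fn A \<rho>) ^ 2 \<le> c0A * exp (assoc_fn A (HA * \<rho>))"
    using assoc_M2[OF A] by blast
  obtain c0M HM where c0M: "c0M \<ge> 1" and HM: "HM \<ge> 1"
    and m2M: "\<And>\<rho>. \<rho> \<ge> 0 \<Longrightarrow> exp (assoc_fn M \<rho>) ^ 2 \<le> c0M * exp (assoc_fn M (HM * \<rho>))"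
    using assoc_M2[OF M] by blast
  have "bounded K" using assms(5) by (rule compact_imp_bounded)
  then obtain R0 where R0: "\<And>\<kappa>. \<kappa> \<in> K \<Longrightarrow> norm \<kappa> \<le> R0" unfolding bounded_iff by blast
  define R where "R = max R0 0"
  have R: "R \<ge> 0" and KR: "\<And>\<kappa>. \<kappa> \<in> K \<Longrightarrow> norm \<kappa> \<le> R" unfolding R_def using R0 by force+
  have U: "\<forall>l\<in>\<Lambda>. in_S beurling M A (\<psi> l)"
    and unif: "if beurling then (\<forall>h>0. \<exists>B. \<forall>l\<in>\<Lambda>. \<forall>\<alpha> x.
          h ^ mlen \<alpha> * norm (mderiv \<alpha> (\<psi> l) x) * exp (assoc_fn A (h * norm (x - y l))) / M (mlen \<alpha>) \<le> B)
        else (\<exists>h>0. \<exists>B. \<forall>l\<in>\<Lambda>. \<forall>\<alpha> x.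
          h ^ mlen \<alpha> * norm (mderiv \<alpha> (\<psi> l) x) * exp (assoc_fn A (h * norm (x - y l))) / M (mlen \<alpha>) \<le> B)"
    using assms(7) unfolding UCPU_def Let_def by auto
  have smooth_of_S: "smooth_fn f" if "in_S beurling M A f" for f
    using that unfolding in_S_def in_S_h_def by (cases beurling) (auto dest: spec[of _ 1])
  have spsi: "\<And>l. l \<in> \<Lambda> \<Longrightarrow> smooth_fn (\<psi> l)" using U smooth_of_S by blast
  have schi: "smooth_fn chi" using smooth_of_S[OF assms(6)] .
  have \<eta>pos: "\<And>x. \<eta> x > 0" using assms(4) unfolding weight_class_def by blast
  have chib: "norm (dlist (replicate k j) chi \<xi>) \<le> B * M k / h ^ k * exp (- assoc_fn A (h * norm \<xi>))" "B \<ge> 0"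
    if "h > 0" "\<And>\<alpha> x. h ^ mlen \<alpha> * norm (mderiv \<alpha> chi x) * exp (assoc_fn A (h * norm x)) / M (mlen \<alpha>) \<le> B"
    for h B k j \<xi>
    using bound_from_S[OF M that(1), of chi A 0 B] that(2) by auto
  show ?thesis
  proof (cases beurling)
    case True
    obtain C\<eta> \<tau> where C\<eta>: "C\<eta> > 0" and \<tau>: "\<tau> > 0"
      and \<eta>b: "\<And>x z. \<eta> (x + z) \<le> C\<eta> * \<eta> x * exp (assoc_fn M (\<tau> * norm z))"
      using assms(4) True unfolding weight_class_def by auto
    have "\<exists>C'\<ge>1. \<forall>l\<in>\<Lambda>. \<forall>m\<in>\<Lambda>.
            (SUP x\<in>(+) (y m) ` K. FL1_norm \<eta> (\<lambda>\<xi>. \<psi> l \<xi> * transl x chi \<xi>))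
              \<le> ennreal (C' * exp (- assoc_fn A (h' * norm (y l - y m))))" if h': "h' > 0" for h'
    proof -
      define h where "h = 8 * HA * h' + real CARD('n) * HM * \<tau>"
      have h: "h > 0" unfolding h_def using h' HA HM \<tau> by (simp add: add_pos_pos)
      obtain Bp where Bp: "\<And>l \<alpha> x. l \<in> \<Lambda> \<Longrightarrow>
          h ^ mlen \<alpha> * norm (mderiv \<alpha> (\<psi> l) x) * exp (assoc_fn A (h * norm (x - y l))) / M (mlen \<alpha>) \<le> Bp"
      proof -
        from unif True h obtain B where "\<forall>l\<in>\<Lambda>. \<forall>\<alpha> x.
          h ^ mlen \<alpha> * norm (mderiv \<alpha> (\<psi> l) x) * exp (assoc_fn A (h * norm (x - y l))) / M (mlen \<alpha>) \<le> B"
          by auto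
        then show ?thesis using that by blast
      qed
      obtain Bc where Bc: "\<And>\<alpha> x. h ^ mlen \<alpha> * norm (mderiv \<alpha> chi x) * exp (assoc_fn A (h * norm x)) / M (mlen \<alpha>) \<le> Bc"
      proof -
        from assms(6) True h obtain B where "\<forall>\<alpha> x. h ^ mlen \<alpha> * norm (mderiv \<alpha> chi x) * exp (assoc_fn A (h * norm x)) / M (mlen \<alpha>) \<le> B"
          unfolding in_S_def in_S_h_def by auto
        then show ?thesis using that by blast
      qed
      have Bp0: "Bp \<ge> 0" if "l \<in> \<Lambda>" for l using bound_from_S(2)[OF M h Bp[OF that]] .
      have "\<Lambda> \<noteq> {}"
      proof
        assume "\<Lambda> = {}"
        then show False using assms(7) unfolding UCPU_def by auto
      qed
      then have Bp0: "Bp \<ge> 0" using Bp0 by blast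
      have hb: "HM * \<tau> \<le> 3 * h / 2 / real CARD('n)"
      proof -
        have "real CARD('n) * (HM * \<tau>) \<le> h" unfolding h_def using h' HA by simp
        then have "HM * \<tau> \<le> h / real CARD('n)" by (simp add: field_simps)
        also have "\<dots> \<le> 3 * h / 2 / real CARD('n)" using h by (intro divide_right_mono) auto
        finally show ?thesis .
      qed
      obtain C' where C': "C' \<ge> 1" and CC: "\<forall>l\<in>\<Lambda>. \<forall>m\<in>\<Lambda>.
            (SUP x\<in>(+) (y m) ` K. FL1_norm \<eta> (\<lambda>\<xi>. \<psi> l \<xi> * transl x chi \<xi>))
              \<le> ennreal (C' * exp (- assoc_fn A (h / (8 * HA) * norm (y l - y m))))"
      proof -
        have bp: "norm (dlist (replicate k j) (\<psi> l) \<xi>) \<le> Bp * M k / h ^ k * exp (- assoc_fn A (h * norm (\<xi> - y l)))"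
          if l: "l \<in> \<Lambda>" for l j k \<xi>
          by (rule bound_from_S(1)[OF M h Bp[OF l]])
        have bc: "norm (dlist (replicate k j) chi \<xi>) \<le> Bc * M k / h ^ k * exp (- assoc_fn A (h * norm \<xi>))" for j k \<xi>
          by (rule chib(1)[OF h Bc])
        have Bc0: "Bc \<ge> 0" by (rule chib(2)[OF h Bc])
        have ex: "\<exists>C'\<ge>1. \<forall>l\<in>\<Lambda>. \<forall>m\<in>\<Lambda>.
            (SUP x\<in>(+) (y m) ` K. FL1_norm \<eta> (\<lambda>\<xi>. \<psi> l \<xi> * transl x chi \<xi>))
              \<le> ennreal (C' * exp (- assoc_fn A (h / (8 * HA) * norm (y l - y m))))"
          by (rule core[where psi=\<psi> and y=y and chi=chi and \<eta>=\<eta> and K=K and \<Lambda>=\<Lambda>,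
              OF M A h c0A HA m2A c0M HM m2M R KR spsi schi Bp0 Bc0 bp bc \<eta>pos C\<eta> \<tau> \<eta>b hb])
        show ?thesis using ex that by blast
      qed
      have hh: "h' \<le> h / (8 * HA)" unfolding h_def using HA HM \<tau> h' by (simp add: field_simps)
      show ?thesis
      proof (intro exI[of _ C'] conjI ballI)
        show "C' \<ge> 1" by (rule C')
        fix l m assume l: "l \<in> \<Lambda>" and m: "m \<in> \<Lambda>"
        have "exp (- assoc_fn A (h / (8 * HA) * norm (y l - y m))) \<le> exp (- assoc_fn A (h' * norm (y l - y m)))"
        proof -
          have "h' * norm (y l - y m) \<le> h / (8 * HA) * norm (y l - y m)" by (rule mult_right_mono) (use hh in auto)
          then have "assoc_fn A (h' * norm (y l - y m)) \<le> assoc_fn A (h / (8 * HA) * norm (y l - y m))"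
            using h' by (intro assoc_mono[OF A]) auto
          then show ?thesis by simp
        qed
        then have "C' * exp (- assoc_fn A (h / (8 * HA) * norm (y l - y m))) \<le> C' * exp (- assoc_fn A (h' * norm (y l - y m)))"
          using C' by (intro mult_left_mono) auto
        then show "(SUP x\<in>(+) (y m) ` K. FL1_norm \<eta> (\<lambda>\<xi>. \<psi> l \<xi> * transl x chi \<xi>))
              \<le> ennreal (C' * exp (- assoc_fn A (h' * norm (y l - y m))))"
          using CC l m ennreal_leI order_trans by blast
      qed
    qed
    then show ?thesis using True by simp
  next
    case False
    obtain hp Bp where hp: "hp > 0" and Bp: "\<And>l \<alpha> x. l \<in> \<Lambda> \<Longrightarrow>
          hp ^ mlen \<alpha> * norm (mderiv \<alpha> (\<psi> l) x) * exp (assoc_fn A (hp * norm (x - y l))) / M (mlen \<alpha>) \<le> Bp"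
    proof -
      from unif False obtain h B where "h > 0" "\<forall>l\<in>\<Lambda>. \<forall>\<alpha> x.
          h ^ mlen \<alpha> * norm (mderiv \<alpha> (\<psi> l) x) * exp (assoc_fn A (h * norm (x - y l))) / M (mlen \<alpha>) \<le> B"
        by auto
      then show ?thesis using that by blast
    qed
    obtain hc Bc where hc: "hc > 0" and Bc: "\<And>\<alpha> x. hc ^ mlen \<alpha> * norm (mderiv \<alpha> chi x) * exp (assoc_fn A (hc * norm x)) / M (mlen \<alpha>) \<le> Bc"
    proof -
      from assms(6) False obtain h B where "h > 0" "\<forall>\<alpha> x. h ^ mlen \<alpha> * norm (mderiv \<alpha> chi x) * exp (assoc_fn A (h * norm x)) / M (mlen \<alpha>) \<le> B"
        unfolding in_S_def in_S_h_def by auto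
      then show ?thesis using that by blast
    qed
    define h where "h = min hp hc"
    have h: "h > 0" unfolding h_def using hp hc by simp
    have "\<Lambda> \<noteq> {}"
    proof
      assume "\<Lambda> = {}"
      then show False using assms(7) unfolding UCPU_def by auto
    qed
    then obtain l0 where "l0 \<in> \<Lambda>" by blast
    have Bp0: "Bp \<ge> 0" using bound_from_S(2)[OF M hp Bp[OF \<open>l0 \<in> \<Lambda>\<close>]] .
    have Bc0: "Bc \<ge> 0" using chib(2)[OF hc Bc] .
    have bp: "norm (dlist (replicate k j) (\<psi> l) \<xi>) \<le> Bp * M k / h ^ k * exp (- assoc_fn A (h * norm (\<xi> - y l)))"
      if l: "l \<in> \<Lambda>" for l j k \<xi>
      by (rule bound_lower[OF A M h _ Bp0 bound_from_S(1)[OF M hp Bp[OF l]]]) (auto simp: h_def)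
    have bc: "norm (dlist (replicate k j) chi \<xi>) \<le> Bc * M k / h ^ k * exp (- assoc_fn A (h * norm \<xi>))" for j k \<xi>
      by (rule bound_lower[OF A M h _ Bc0 chib(1)[OF hc Bc]]) (auto simp: h_def)
    define \<tau> where "\<tau> = 3 * h / 2 / real CARD('n) / HM"
    have \<tau>: "\<tau> > 0" unfolding \<tau>_def using h HM by simp
    obtain C\<eta> where C\<eta>: "C\<eta> > 0"
      and \<eta>b: "\<And>x z. \<eta> (x + z) \<le> C\<eta> * \<eta> x * exp (assoc_fn M (\<tau> * norm z))"
      using assms(4) False \<tau> unfolding weight_class_def by auto
    have hb: "HM * \<tau> \<le> 3 * h / 2 / real CARD('n)" unfolding \<tau>_def using HM by simp
    obtain C' where C': "C' \<ge> 1" and CC: "\<forall>l\<in>\<Lambda>. \<forall>m\<in>\<Lambda>.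
          (SUP x\<in>(+) (y m) ` K. FL1_norm \<eta> (\<lambda>\<xi>. \<psi> l \<xi> * transl x chi \<xi>))
            \<le> ennreal (C' * exp (- assoc_fn A (h / (8 * HA) * norm (y l - y m))))"
    proof -
      have ex: "\<exists>C'\<ge>1. \<forall>l\<in>\<Lambda>. \<forall>m\<in>\<Lambda>.
            (SUP x\<in>(+) (y m) ` K. FL1_norm \<eta> (\<lambda>\<xi>. \<psi> l \<xi> * transl x chi \<xi>))
              \<le> ennreal (C' * exp (- assoc_fn A (h / (8 * HA) * norm (y l - y m))))"
        by (rule core[where psi=\<psi> and y=y and chi=chi and \<eta>=\<eta> and K=K and \<Lambda>=\<Lambda>,
            OF M A h c0A HA m2A c0M HM m2M R KR spsi schi Bp0 Bc0 bp bc \<eta>pos C\<eta> \<tau> \<eta>b hb])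
      show ?thesis using ex that by blast
    qed
    have "h / (8 * HA) > 0" using h HA by simp
    then have "\<exists>h'>0. \<exists>C'\<ge>1. \<forall>l\<in>\<Lambda>. \<forall>m\<in>\<Lambda>.
            (SUP x\<in>(+) (y m) ` K. FL1_norm \<eta> (\<lambda>\<xi>. \<psi> l \<xi> * transl x chi \<xi>))
              \<le> ennreal (C' * exp (- assoc_fn A (h' * norm (y l - y m))))"
      using C' CC by blast
    then show ?thesis using False by simp
  qed
qed


end
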